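(* For every dynamic network congestion game $(\mathcal A,n)$ and every vector $\vec\gamma=(\gamma_i)_{i\in[n]}$ of reals, the cost of a shortest path in the graph $\mathcal G^{\vec\gamma}_{NE}$ from $(c_{\mathsf{src}},\infty^n)$ to some vertex of the form $(c_{\mathsf{tgt}},b)$ equals the $\vec\gamma$-weighted social cost of a $\vec\gamma$-minimal Nash equilibrium of $(\mathcal A,n)$.
   Context: An arena is $\mathcal A=(V,E,\mathsf{src},\mathsf{tgt})$ with $V$ finite and $E$ a partial function from $V\times V$ to non-decreasing piecewise-affine functions $\mathbb N\to\mathbb N$ (edge $e$ has cost function $\ell_e$); $\mathsf{tgt}$ has only a self-loop of constant cost $0$ and is reachable from every state. In the dynamic NCG $(\mathcal A,n)$ with players $[n]$, configurations are maps $c:[n]\to V$; $c_{\mathsf{src}}$, $c_{\mathsf{tgt}}$ map everyone to $\mathsf{src}$, resp. $\mathsf{tgt}$. From $c$, a move vector $(e_i)_i$ ($e_i$ an edge leaving $c(i)$) yields the transition $(c,w,c')$ where $c'(i)$ is the target of $e_i$ and $w(i)=\ell_{e_i}(u_i)$, $u_i$ being the number of $j$ with $e_j=e_i$; write $c\Rightarrow c'$ and $\mathrm{cost}_i(c,c')=w(i)$. Let $C=V^{[n]}$ and $T$ the set of these transitions. Strategies map finite histories from $c_{\mathsf{src}}$ to edges leaving the player's current position; $\mathrm{cost}_i(\sigma)$ is player $i$'s total payment along the outcome of profile $\sigma$ until reaching $\mathsf{tgt}$; a Nash equilibrium is a profile in which no player can lower their cost by a unilateral change. The $\vec\gamma$-weighted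 social cost of $\sigma$ is $\sum_k\gamma_k\mathrm{cost}_k(\sigma)$, and a $\vec\gamma$-minimal Nash equilibrium is one with the least $\vec\gamma$-weighted social cost among Nash equilibria. Let $\mathrm{dev}_i(c,c')=\{c''\mid c\Rightarrow c'',\ c''(j)=c'(j)\ \forall j\ne i\}$ and $\mathrm{val}_{i,c}=\sup_{\sigma_{-i}}\inf_{\sigma_i}\mathrm{cost}_i((\sigma_{-i},\sigma_i),c)$ (game started from $c$). Let $\kappa=\max_{e\in E}\ell_e(n)$ and $Y=|V|\cdot\kappa$. The weighted graph $\mathcal G^{\vec\gamma}_{NE}$ has vertex set $C\times(\{1,\dots,Y\}\cup\{0,\infty\})^n$ and an edge $((c,b),z,(c',b'))$ iff there is $(c,w,c')\in T$ with $z=\vec\gamma\cdot w$ and, for all $i\in[n]$, $b'_i=\min\big(b_i-w_i,\ \min_{c''\in\mathrm{dev}_i(c,c')}\mathrm{cost}_i(c,c'')+\mathrm{val}_{i,c''}-w_i\big)$ (so in particular each $b'_i$ must be nonnegative); the cost of a path is the sum of its edge weights $z$. *)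

theory Defs
  imports Main "HOL-Library.FuncSet" "HOL-Library.Extended_Real"
begin

text \<open>Since E is a partial function on V x V, an edge is determined by its endpoints,
  so a player's move is represented by the target vertex.\<close>

record 'v arena =
  verts :: "'v set"
  edg :: "'v \<Rightarrow> 'v \<Rightarrow> (nat \<Rightarrow> nat) option"
  src :: 'v
  tgt :: 'v

text \<open>Piecewise affine N -> N: finitely many breakpoints t_1 < ... < t_k; on each piece
  (indexed by the number of breakpoints <= x) the function is affine.\<close>
definition piecewise_affine :: "(nat \<Rightarrow> nat) \<Rightarrow> bool" where
  "piecewise_affine f \<longleftrightarrow> (\<exists>(t::nat list) (a::nat \<Rightarrow> real) (b::nat \<Rightarrow> real).
      sorted_wrt (<) t \<and>
      (\<forall>x. real (f x) = a (length (filter (\<lambda>s. s \<le> x) t)) * real x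
                        + b (length (filter (\<lambda>s. s \<le> x) t))))"

definition edge_rel :: "'v arena \<Rightarrow> ('v \<times> 'v) set" where
  "edge_rel A = {(u, v). edg A u v \<noteq> None}"

definition valid_arena :: "'v arena \<Rightarrow> bool" where
  "valid_arena A \<longleftrightarrow>
     finite (verts A) \<and> src A \<in> verts A \<and> tgt A \<in> verts A \<and>
     (\<forall>u v. edg A u v \<noteq> None \<longrightarrow> u \<in> verts A \<and> v \<in> verts A) \<and>
     (\<forall>u v f. edg A u v = Some f \<longrightarrow> mono f \<and> piecewise_affine f) \<and>
     (\<forall>v. edg A (tgt A) v \<noteq> None \<longleftrightarrow> v = tgt A) \<and>
     edg A (tgt A) (tgt A) = Some (\<lambda>_. 0) \<and>
     (\<forall>v\<in>verts A. (v, tgt A) \<in> (edge_rel A)\<^sup>*)"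

type_synonym 'v config = "nat \<Rightarrow> 'v"

definition configs :: "'v arena \<Rightarrow> nat \<Rightarrow> 'v config set" where
  "configs A n = {0..<n} \<rightarrow>\<^sub>E verts A"

definition cconst :: "nat \<Rightarrow> 'v \<Rightarrow> 'v config" where
  "cconst n v = (\<lambda>i\<in>{0..<n}. v)"

definition step :: "'v arena \<Rightarrow> nat \<Rightarrow> 'v config \<Rightarrow> 'v config \<Rightarrow> bool" where
  "step A n c c' \<longleftrightarrow> c \<in> configs A n \<and> c' \<in> configs A n \<and>
     (\<forall>i<n. edg A (c i) (c' i) \<noteq> None)"

definition load :: "nat \<Rightarrow> 'v config \<Rightarrow> 'v config \<Rightarrow> nat \<Rightarrow> nat" where
  "load n c c' i = card {j\<in>{0..<n}. c j = c i \<and> c' j = c' i}"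

definition tcost :: "'v arena \<Rightarrow> nat \<Rightarrow> 'v config \<Rightarrow> 'v config \<Rightarrow> nat \<Rightarrow> nat" where
  "tcost A n c c' i = (case edg A (c i) (c' i) of Some f \<Rightarrow> f (load n c c' i) | None \<Rightarrow> 0)"

type_synonym 'v strat = "'v config list \<Rightarrow> 'v"

definition is_strategy :: "'v arena \<Rightarrow> nat \<Rightarrow> nat \<Rightarrow> 'v strat \<Rightarrow> bool" where
  "is_strategy A n i s \<longleftrightarrow>
     (\<forall>h. h \<noteq> [] \<and> set h \<subseteq> configs A n \<longrightarrow> edg A (last h i) (s h) \<noteq> None)"

definition is_profile :: "'v arena \<Rightarrow> nat \<Rightarrow> (nat \<Rightarrow> 'v strat) \<Rightarrow> bool" where
  "is_profile A n \<sigma> \<longleftrightarrow> (\<forall>i<n. is_strategy A n i (\<sigma> i))"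

primrec play :: "nat \<Rightarrow> (nat \<Rightarrow> 'v strat) \<Rightarrow> 'v config \<Rightarrow> nat \<Rightarrow> 'v config list" where
  "play n \<sigma> c 0 = [c]"
| "play n \<sigma> c (Suc k) = play n \<sigma> c k @ [(\<lambda>i\<in>{0..<n}. \<sigma> i (play n \<sigma> c k))]"

definition outcome :: "nat \<Rightarrow> (nat \<Rightarrow> 'v strat) \<Rightarrow> 'v config \<Rightarrow> nat \<Rightarrow> 'v config" where
  "outcome n \<sigma> c k = last (play n \<sigma> c k)"

definition cost :: "'v arena \<Rightarrow> nat \<Rightarrow> (nat \<Rightarrow> 'v strat) \<Rightarrow> 'v config \<Rightarrow> nat \<Rightarrow> enat" where
  "cost A n \<sigma> c i =
     (if \<exists>k. outcome n \<sigma> c k i = tgt A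
      then enat (\<Sum>k < (LEAST k. outcome n \<sigma> c k i = tgt A).
                   tcost A n (outcome n \<sigma> c k) (outcome n \<sigma> c (Suc k)) i)
      else \<infinity>)"

definition nash_eq :: "'v arena \<Rightarrow> nat \<Rightarrow> (nat \<Rightarrow> 'v strat) \<Rightarrow> bool" where
  "nash_eq A n \<sigma> \<longleftrightarrow> is_profile A n \<sigma> \<and>
     (\<forall>i<n. \<forall>\<tau>. is_strategy A n i \<tau> \<longrightarrow>
        cost A n \<sigma> (cconst n (src A)) i \<le> cost A n (\<sigma>(i := \<tau>)) (cconst n (src A)) i)"

definition wsc :: "'v arena \<Rightarrow> nat \<Rightarrow> (nat \<Rightarrow> real) \<Rightarrow> (nat \<Rightarrow> 'v strat) \<Rightarrow> ereal" where
  "wsc A n \<gamma> \<sigma> = (\<Sum>k<n. ereal (\<gamma> k) * ereal_of_enat (cost A n \<sigma> (cconst n (src A)) k))"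

definition gamma_minimal_NE :: "'v arena \<Rightarrow> nat \<Rightarrow> (nat \<Rightarrow> real) \<Rightarrow> (nat \<Rightarrow> 'v strat) \<Rightarrow> bool" where
  "gamma_minimal_NE A n \<gamma> \<sigma> \<longleftrightarrow> nash_eq A n \<sigma> \<and>
     (\<forall>\<sigma>'. nash_eq A n \<sigma>' \<longrightarrow> wsc A n \<gamma> \<sigma> \<le> wsc A n \<gamma> \<sigma>')"

definition val :: "'v arena \<Rightarrow> nat \<Rightarrow> nat \<Rightarrow> 'v config \<Rightarrow> enat" where
  "val A n i c = (SUP \<sigma>\<in>{\<sigma>. is_profile A n \<sigma>}. INF \<tau>\<in>{\<tau>. is_strategy A n i \<tau>}.
                    cost A n (\<sigma>(i := \<tau>)) c i)"

definition dev :: "'v arena \<Rightarrow> nat \<Rightarrow> nat \<Rightarrow> 'v config \<Rightarrow> 'v config \<Rightarrow> 'v config set" where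
  "dev A n i c c' = {c''. step A n c c'' \<and> (\<forall>j<n. j \<noteq> i \<longrightarrow> c'' j = c' j)}"

definition kappa :: "'v arena \<Rightarrow> nat \<Rightarrow> nat" where
  "kappa A n = Max {f n | u v f. edg A u v = Some f}"

definition Ybound :: "'v arena \<Rightarrow> nat \<Rightarrow> nat" where
  "Ybound A n = card (verts A) * kappa A n"

definition budgets :: "'v arena \<Rightarrow> nat \<Rightarrow> (nat \<Rightarrow> enat) set" where
  "budgets A n = {0..<n} \<rightarrow>\<^sub>E {b. b = \<infinity> \<or> b \<le> enat (Ybound A n)}"

definition Gverts :: "'v arena \<Rightarrow> nat \<Rightarrow> ('v config \<times> (nat \<Rightarrow> enat)) set" where
  "Gverts A n = configs A n \<times> budgets A n"

definition Gedge :: "'v arena \<Rightarrow> nat \<Rightarrow> (nat \<Rightarrow> real) \<Rightarrow>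
    'v config \<times> (nat \<Rightarrow> enat) \<Rightarrow> real \<Rightarrow> 'v config \<times> (nat \<Rightarrow> enat) \<Rightarrow> bool" where
  "Gedge A n \<gamma> v z v' \<longleftrightarrow>
     (case (v, v') of ((c, b), (c', b')) \<Rightarrow>
        v \<in> Gverts A n \<and> v' \<in> Gverts A n \<and> step A n c c' \<and>
        z = (\<Sum>i<n. \<gamma> i * real (tcost A n c c' i)) \<and>
        (\<forall>i<n. ereal_of_enat (b' i) =
           min (ereal_of_enat (b i) - ereal (real (tcost A n c c' i)))
               (INF c''\<in>dev A n i c c'.
                  ereal (real (tcost A n c c'' i)) + ereal_of_enat (val A n i c'')
                  - ereal (real (tcost A n c c' i)))))"

definition G_path :: "'v arena \<Rightarrow> nat \<Rightarrow> (nat \<Rightarrow> real) \<Rightarrow>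
    ('v config \<times> (nat \<Rightarrow> enat)) list \<Rightarrow> real list \<Rightarrow> bool" where
  "G_path A n \<gamma> vs zs \<longleftrightarrow> vs \<noteq> [] \<and> length vs = length zs + 1 \<and>
     (\<forall>k<length zs. Gedge A n \<gamma> (vs ! k) (zs ! k) (vs ! Suc k)) \<and>
     hd vs = (cconst n (src A), (\<lambda>i\<in>{0..<n}. \<infinity>)) \<and>
     fst (last vs) = cconst n (tgt A)"

definition shortest_G_path :: "'v arena \<Rightarrow> nat \<Rightarrow> (nat \<Rightarrow> real) \<Rightarrow>
    ('v config \<times> (nat \<Rightarrow> enat)) list \<Rightarrow> real list \<Rightarrow> bool" where
  "shortest_G_path A n \<gamma> vs zs \<longleftrightarrow> G_path A n \<gamma> vs zs \<and>
     (\<forall>vs' zs'. G_path A n \<gamma> vs' zs' \<longrightarrow> sum_list zs \<le> sum_list zs')"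

end

theory Submission
  imports Defs
begin


definition hist :: "(nat \<Rightarrow> 'a) \<Rightarrow> nat \<Rightarrow> 'a list" where
  "hist r k = map r [0..<Suc k]"

lemma hist_Suc: "hist r (Suc k) = hist r k @ [r (Suc k)]"
  by (simp add: hist_def)
lemma hist_0: "hist r 0 = [r 0]" by (simp add: hist_def)
lemma hist_ne[simp]: "hist r k \<noteq> []" by (simp add: hist_def)
lemma hist_len[simp]: "length (hist r k) = Suc k" by (simp add: hist_def)
lemma hist_last[simp]: "last (hist r k) = r k" by (simp add: hist_def)
lemma hist_nth[simp]: "j \<le> k \<Longrightarrow> hist r k ! j = r j"
  by (simp add: hist_def nth_map_upt less_Suc_eq_le del: upt_Suc)
lemma hist_set: "set (hist r k) = r ` {0..k}"
  by (auto simp add: hist_def atLeastLessThanSuc_atLeastAtMost simp del: upt_Suc)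
lemma hist_cong: "(\<And>j. j \<le> k \<Longrightarrow> r j = r' j) \<Longrightarrow> hist r k = hist r' k"
  by (simp add: hist_def del: upt_Suc)
lemma hist_take: "j \<le> k \<Longrightarrow> take (Suc j) (hist r k) = hist r j"
  by (simp add: hist_def take_map del: upt_Suc)
lemma hist_append: "hist r t @ hist (\<lambda>m. r (Suc t + m)) m = hist r (Suc t + m)"
proof (induction m)
  case 0 then show ?case by (simp add: hist_Suc hist_0)
next
  case (Suc m)
  have "hist r (Suc t + Suc m) = hist r (Suc t + m) @ [r (Suc (Suc t + m))]"
    by (simp add: hist_Suc[symmetric])
  then show ?case using Suc by (simp add: hist_Suc)
qed
lemma hist_drop: "drop (Suc t) (hist r (Suc t + m)) = hist (\<lambda>m. r (Suc t + m)) m"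
  by (subst hist_append[symmetric]) simp

lemma play_eq_hist: "play n \<sigma> c k = hist (outcome n \<sigma> c) k"
proof (induction k)
  case 0 then show ?case by (simp add: hist_0 outcome_def)
next
  case (Suc k) then show ?case by (simp add: hist_Suc outcome_def)
qed

lemma outcome_0[simp]: "outcome n \<sigma> c 0 = c" by (simp add: outcome_def)
lemma outcome_Suc: "outcome n \<sigma> c (Suc k) = (\<lambda>i\<in>{0..<n}. \<sigma> i (hist (outcome n \<sigma> c) k))"
  by (simp add: outcome_def play_eq_hist[symmetric])

lemma outcome_unique:
  assumes "r 0 = c" "\<And>k. r (Suc k) = (\<lambda>i\<in>{0..<n}. \<sigma> i (hist r k))"
  shows "outcome n \<sigma> c = r"
proof -
  have "\<forall>j\<le>k. outcome n \<sigma> c j = r j" for k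
  proof (induction k)
    case 0 then show ?case using assms by simp
  next
    case (Suc k)
    have "hist (outcome n \<sigma> c) k = hist r k" using Suc by (intro hist_cong) auto
    then have "outcome n \<sigma> c (Suc k) = r (Suc k)" by (simp add: outcome_Suc assms(2))
    then show ?case using Suc le_Suc_eq by auto
  qed
  then show ?thesis by auto
qed

lemma va_edge_verts: "valid_arena A \<Longrightarrow> edg A u v \<noteq> None \<Longrightarrow> u \<in> verts A \<and> v \<in> verts A"
  unfolding valid_arena_def by blast
lemma va_tgt_out: "valid_arena A \<Longrightarrow> edg A (tgt A) v \<noteq> None \<Longrightarrow> v = tgt A"
  unfolding valid_arena_def by blast
lemma va_tgt_loop: "valid_arena A \<Longrightarrow> edg A (tgt A) (tgt A) = Some (\<lambda>_. 0)"
  unfolding valid_arena_def by blast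
lemma va_mono: "valid_arena A \<Longrightarrow> edg A u v = Some f \<Longrightarrow> mono f"
  unfolding valid_arena_def by blast
lemma va_reach: "valid_arena A \<Longrightarrow> v \<in> verts A \<Longrightarrow> (v, tgt A) \<in> (edge_rel A)\<^sup>*"
  unfolding valid_arena_def by blast
lemma va_finite: "valid_arena A \<Longrightarrow> finite (verts A)"
  unfolding valid_arena_def by blast
lemma va_src: "valid_arena A \<Longrightarrow> src A \<in> verts A"
  unfolding valid_arena_def by blast
lemma va_tgt: "valid_arena A \<Longrightarrow> tgt A \<in> verts A"
  unfolding valid_arena_def by blast

definition vrun :: "'v arena \<Rightarrow> nat \<Rightarrow> (nat \<Rightarrow> 'v config) \<Rightarrow> bool" where
  "vrun A n r \<longleftrightarrow> (\<forall>k. step A n (r k) (r (Suc k)))"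

lemma is_profile_upd: "is_profile A n \<sigma> \<Longrightarrow> is_strategy A n i \<tau> \<Longrightarrow> is_profile A n (\<sigma>(i := \<tau>))"
  by (simp add: is_profile_def)

lemma outcome_configs:
  assumes va: "valid_arena A" and pr: "is_profile A n \<sigma>" and c: "c \<in> configs A n"
  shows "outcome n \<sigma> c k \<in> configs A n"
proof (induction k rule: nat_less_induct)
  case (1 k)
  show ?case
  proof (cases k)
    case 0 then show ?thesis using c by simp
  next
    case (Suc k')
    have hs: "set (hist (outcome n \<sigma> c) k') \<subseteq> configs A n"
      using 1 Suc by (auto simp: hist_set)
    have "\<sigma> i (hist (outcome n \<sigma> c) k') \<in> verts A" if "i < n" for i
    proof -
      have st: "is_strategy A n i (\<sigma> i)" using pr that by (simp add: is_profile_def)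
      have "edg A (last (hist (outcome n \<sigma> c) k')  i) (\<sigma> i (hist (outcome n \<sigma> c) k')) \<noteq> None"
        using st[unfolded is_strategy_def, rule_format, of "hist (outcome n \<sigma> c) k'"] hs by simp
      then show ?thesis using va_edge_verts[OF va] by blast
    qed
    then show ?thesis using Suc by (auto simp: outcome_Suc configs_def)
  qed
qed

lemma outcome_vrun:
  assumes va: "valid_arena A" and pr: "is_profile A n \<sigma>" and c: "c \<in> configs A n"
  shows "vrun A n (outcome n \<sigma> c)"
  unfolding vrun_def step_def
proof (rule allI, intro conjI)
  fix k
  show "outcome n \<sigma> c k \<in> configs A n" "outcome n \<sigma> c (Suc k) \<in> configs A n"
    using outcome_configs[OF assms] by auto
  have hs: "set (hist (outcome n \<sigma> c) k) \<subseteq> configs A n"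
    using outcome_configs[OF assms] by (auto simp: hist_set)
  show "\<forall>i<n. edg A (outcome n \<sigma> c k i) (outcome n \<sigma> c (Suc k) i) \<noteq> None"
    proof (intro allI impI)
    fix i assume "i < n"
    have st: "is_strategy A n i (\<sigma> i)" using pr \<open>i < n\<close> by (simp add: is_profile_def)
    have "edg A (last (hist (outcome n \<sigma> c) k) i) (\<sigma> i (hist (outcome n \<sigma> c) k)) \<noteq> None"
      using st[unfolded is_strategy_def, rule_format, of "hist (outcome n \<sigma> c) k"] hs by simp
    then show "edg A (outcome n \<sigma> c k i) (outcome n \<sigma> c (Suc k) i) \<noteq> None"
      using \<open>i < n\<close> by (simp add: outcome_Suc)
  qed
qed

definition costrun :: "'v arena \<Rightarrow> nat \<Rightarrow> (nat \<Rightarrow> 'v config) \<Rightarrow> nat \<Rightarrow> enat" where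
  "costrun A n r i =
     (if \<exists>k. r k i = tgt A
      then enat (\<Sum>k < (LEAST k. r k i = tgt A). tcost A n (r k) (r (Suc k)) i)
      else \<infinity>)"

lemma cost_costrun: "cost A n \<sigma> c i = costrun A n (outcome n \<sigma> c) i"
  by (simp add: cost_def costrun_def)

lemma absorb:
  assumes va: "valid_arena A" and st: "step A n c c'" and i: "i < n" and t: "c i = tgt A"
  shows "c' i = tgt A \<and> tcost A n c c' i = 0"
proof -
  have "edg A (c i) (c' i) \<noteq> None" using st i by (simp add: step_def)
  then have 1: "c' i = tgt A" using va_tgt_out[OF va] t by metis
  have "edg A (tgt A) (tgt A) = Some (\<lambda>_. 0)" using va_tgt_loop[OF va] .
  then show ?thesis using 1 t by (simp add: tcost_def)
qed

lemma absorb_run: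
  assumes va: "valid_arena A" and vr: "vrun A n r" and i: "i < n" and t: "r k i = tgt A"
  shows "r (k + m) i = tgt A \<and> tcost A n (r (k+m)) (r (Suc (k+m))) i = 0"
proof (induction m)
  case 0
  have "step A n (r k) (r (Suc k))" using vr by (simp add: vrun_def)
  then show ?case using absorb[OF va _ i, of "r k" "r (Suc k)"] t by simp
next
  case (Suc m)
  then have t': "r (k + Suc m) i = tgt A" using absorb[OF va _ i, of "r (k+m)" "r (Suc (k+m))"] vr
    by (simp add: vrun_def)
  have "step A n (r (k + Suc m)) (r (Suc (k + Suc m)))" using vr by (simp add: vrun_def)
  then show ?case using absorb[OF va _ i, of "r (k+Suc m)" "r (Suc (k+Suc m))"] t' by simp
qed

lemma sum_split_shift: "(\<Sum>s<k+m. f s) = (\<Sum>s<k. f s) + (\<Sum>s<m. f (k+s::nat))"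
  by (induction m) (auto simp: add.assoc)

lemma costrun_split:
  assumes va: "valid_arena A" and vr: "vrun A n r" and i: "i < n"
  shows "costrun A n r i = enat (\<Sum>s<k. tcost A n (r s) (r (Suc s)) i) + costrun A n (\<lambda>m. r (k+m)) i"
proof (cases "\<exists>s. r s i = tgt A")
  case True
  define L where "L = (LEAST s. r s i = tgt A)"
  have L: "r L i = tgt A" unfolding L_def by (rule LeastI_ex[OF True])
  have nL: "s < L \<Longrightarrow> r s i \<noteq> tgt A" for s unfolding L_def by (rule not_less_Least)
  let ?w = "\<lambda>s. tcost A n (r s) (r (Suc s)) i"
  have c1: "costrun A n r i = enat (\<Sum>s<L. ?w s)"
    unfolding costrun_def L_def using True by (simp only: if_True)
  show ?thesis
  proof (cases "L \<le> k")
    case True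
    have rk: "r (k + 0) i = tgt A" using absorb_run[OF va vr i L, of "k - L"] True by simp
    have sh: "costrun A n (\<lambda>m. r (k+m)) i = 0"
    proof -
      have e: "\<exists>m. r (k+m) i = tgt A" using rk by blast
      have "(LEAST m. r (k+m) i = tgt A) = 0" using rk by (intro Least_eq_0) simp
      then show ?thesis unfolding costrun_def using e by (simp add: zero_enat_def)
    qed
    have "(\<Sum>s<k. ?w s) = (\<Sum>s<L. ?w s) + (\<Sum>s<k-L. ?w (L+s))"
      using sum_split_shift[of ?w L "k-L"] True by simp
    also have "(\<Sum>s<k-L. ?w (L+s)) = 0"
      using absorb_run[OF va vr i L] by simp
    finally show ?thesis using sh c1 by simp
  next
    case False
    have ex: "\<exists>m. r (k+m) i = tgt A" using False L by (intro exI[of _ "L-k"]) simp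
    have le: "(LEAST m. r (k+m) i = tgt A) = L - k"
    proof (rule Least_equality)
      show "r (k + (L - k)) i = tgt A" using False L by simp
      fix y assume "r (k + y) i = tgt A"
      then have "\<not> k + y < L" using nL by blast
      then show "L - k \<le> y" by simp
    qed
    have c2: "costrun A n (\<lambda>m. r (k+m)) i = enat (\<Sum>s<L-k. ?w (k+s))"
      unfolding costrun_def using ex le by simp
    have "(\<Sum>s<L. ?w s) = (\<Sum>s<k. ?w s) + (\<Sum>s<L-k. ?w (k+s))"
      using sum_split_shift[of ?w k "L-k"] False by simp
    then show ?thesis using c1 c2 by simp
  qed
next
  case False
  then have "\<not> (\<exists>m. r (k+m) i = tgt A)" by blast
  then show ?thesis using False by (simp add: costrun_def)
qed

lemma costrun_at:
  assumes va: "valid_arena A" and vr: "vrun A n r" and i: "i < n" and t: "r T i = tgt A"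
  shows "costrun A n r i = enat (\<Sum>s<T. tcost A n (r s) (r (Suc s)) i)"
proof -
  have "costrun A n (\<lambda>m. r (T+m)) i = 0" unfolding costrun_def using t by (auto simp: zero_enat_def intro!: Least_eq_0 exI[of _ 0])
  then show ?thesis using costrun_split[OF va vr i, of T] by simp
qed




lemma tcost_le_kappa:
  assumes va: "valid_arena A" and st: "step A n c c'" and i: "i < n"
  shows "tcost A n c c' i \<le> kappa A n"
proof -
  obtain f where f: "edg A (c i) (c' i) = Some f" using st i by (auto simp: step_def)
  have "load n c c' i \<le> n"
    unfolding load_def by (rule order_trans[OF card_mono[of "{0..<n}"]]) auto
  then have "f (load n c c' i) \<le> f n" using va_mono[OF va f] by (simp add: mono_def)
  moreover have "f n \<le> kappa A n"
    unfolding kappa_def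
  proof (rule Max_ge)
    have "{f n |u v f. edg A u v = Some f} \<subseteq> (\<lambda>(u,v). the (edg A u v) n) ` (verts A \<times> verts A)"
    proof
      fix x assume "x \<in> {f n |u v f. edg A u v = Some f}"
      then obtain u v g where "x = g n" "edg A u v = Some g" by blast
      moreover then have "u \<in> verts A" "v \<in> verts A" using va_edge_verts[OF va, of u v] by auto
      ultimately show "x \<in> (\<lambda>(u,v). the (edg A u v) n) ` (verts A \<times> verts A)"
        by (auto intro!: image_eqI[of _ _ "(u,v)"])
    qed
    then show "finite {f n |u v f. edg A u v = Some f}"
      by (rule finite_subset) (use va_finite[OF va] in auto)
    show "f n \<in> {f n |u v f. edg A u v = Some f}" using f by blast
  qed
  ultimately show ?thesis using f by (simp add: tcost_def)
qed

definition dst :: "'v arena \<Rightarrow> 'v \<Rightarrow> nat" where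
  "dst A v = (LEAST k. (v, tgt A) \<in> (edge_rel A) ^^ k)"

lemma dist_ex: "valid_arena A \<Longrightarrow> v \<in> verts A \<Longrightarrow> (v, tgt A) \<in> (edge_rel A) ^^ dst A v"
  unfolding dst_def by (rule LeastI_ex) (use va_reach[of A v] rtrancl_power in blast)

lemma dist_le: "(v, tgt A) \<in> (edge_rel A) ^^ k \<Longrightarrow> dst A v \<le> k"
  unfolding dst_def by (rule Least_le)

lemma dist_tgt: "dst A (tgt A) = 0"
  using dist_le[of "tgt A" A 0] by simp

lemma dist_0: "valid_arena A \<Longrightarrow> v \<in> verts A \<Longrightarrow> dst A v = 0 \<Longrightarrow> v = tgt A"
  using dist_ex[of A v] by simp

lemma nxt_ex:
  assumes va: "valid_arena A" and v: "v \<in> verts A" and nt: "v \<noteq> tgt A"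
  shows "\<exists>u. edg A v u \<noteq> None \<and> dst A u + 1 = dst A v"
proof -
  define d where "d = dst A v"
  have "d \<noteq> 0" using dist_0[OF va v] nt unfolding d_def by blast
  then have sd: "Suc (d - 1) = dst A v" using d_def by simp
  have "(v, tgt A) \<in> (edge_rel A) ^^ Suc (d - 1)" unfolding sd by (rule dist_ex[OF va v])
  from relpow_Suc_D2[OF this] obtain u where u: "(v, u) \<in> edge_rel A" "(u, tgt A) \<in> (edge_rel A) ^^ (d - 1)"
    by (elim exE conjE)
  have e: "edg A v u \<noteq> None" using u(1) by (simp add: edge_rel_def)
  then have uv: "u \<in> verts A" using va_edge_verts[OF va] by blast
  have 1: "dst A u \<le> d - 1" using dist_le[OF u(2)] .
  have "(v, tgt A) \<in> (edge_rel A) ^^ Suc (dst A u)"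
    using relpow_Suc_I2[OF u(1) dist_ex[OF va uv]] .
  then have "d \<le> Suc (dst A u)" unfolding d_def by (rule dist_le)
  then have "dst A u + 1 = dst A v" using 1 \<open>d \<noteq> 0\<close> unfolding d_def by linarith
  then show ?thesis using e by blast
qed

definition nxt :: "'v arena \<Rightarrow> 'v \<Rightarrow> 'v" where
  "nxt A v = (if v = tgt A then tgt A else SOME u. edg A v u \<noteq> None \<and> dst A u + 1 = dst A v)"

lemma nxt_prop:
  assumes va: "valid_arena A" and v: "v \<in> verts A"
  shows "edg A v (nxt A v) \<noteq> None \<and> nxt A v \<in> verts A \<and> (v \<noteq> tgt A \<longrightarrow> dst A (nxt A v) + 1 = dst A v)"
proof (cases "v = tgt A")
  case True
  then show ?thesis using va_tgt_loop[OF va] va_tgt[OF va] by (simp add: nxt_def)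
next
  case False
  have "edg A v (nxt A v) \<noteq> None \<and> dst A (nxt A v) + 1 = dst A v"
    using someI_ex[OF nxt_ex[OF va v False]] False by (simp add: nxt_def)
  moreover then have "nxt A v \<in> verts A" using va_edge_verts[OF va, of v "nxt A v"] by simp
  ultimately show ?thesis by simp
qed

lemma nxt_iter:
  assumes va: "valid_arena A" and v: "v \<in> verts A"
  shows "m \<le> dst A v \<Longrightarrow> (nxt A ^^ m) v \<in> verts A \<and> dst A ((nxt A ^^ m) v) = dst A v - m"
proof (induction m)
  case 0 then show ?case using v by simp
next
  case (Suc m)
  let ?u = "(nxt A ^^ m) v"
  have u: "?u \<in> verts A" "dst A ?u = dst A v - m" using Suc by auto
  then have "?u \<noteq> tgt A" using Suc.prems dist_tgt[of A] by (metis Suc_le_eq zero_less_diff less_irrefl)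
  then have "(nxt A ^^ Suc m) v \<in> verts A" "dst A ((nxt A ^^ Suc m) v) + 1 = dst A ?u"
    using nxt_prop[OF va u(1)] by auto
  then show ?case using u Suc.prems by simp
qed

lemma nxt_iter_tgt:
  assumes va: "valid_arena A" and v: "v \<in> verts A"
  shows "(nxt A ^^ dst A v) v = tgt A"
proof -
  have "(nxt A ^^ dst A v) v \<in> verts A \<and> dst A ((nxt A ^^ dst A v) v) = dst A v - dst A v"
    using nxt_iter[OF va v, of "dst A v"] by (simp only: order_refl simp_thms)
  then show ?thesis using dist_0[OF va] by (simp only: diff_self_eq_0)
qed

lemma dist_lt_card:
  assumes va: "valid_arena A" and v: "v \<in> verts A"
  shows "dst A v < card (verts A)"
proof -
  have "inj_on (\<lambda>m. (nxt A ^^ m) v) {0..dst A v}"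
  proof (rule inj_onI)
    fix x y assume "x \<in> {0..dst A v}" "y \<in> {0..dst A v}" "(nxt A ^^ x) v = (nxt A ^^ y) v"
    then have "dst A ((nxt A ^^ x) v) = dst A v - x" "dst A ((nxt A ^^ y) v) = dst A v - y"
      "x \<le> dst A v" "y \<le> dst A v"
      using nxt_iter[OF va v, of x] nxt_iter[OF va v, of y] by auto
    then show "x = y" using \<open>(nxt A ^^ x) v = (nxt A ^^ y) v\<close> by simp
  qed
  moreover have "(\<lambda>m. (nxt A ^^ m) v) ` {0..dst A v} \<subseteq> verts A"
  proof
    fix x assume "x \<in> (\<lambda>m. (nxt A ^^ m) v) ` {0..dst A v}"
    then obtain m where "m \<le> dst A v" "x = (nxt A ^^ m) v" by auto
    then show "x \<in> verts A" using nxt_iter[OF va v, of m] by simp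
  qed
  ultimately have "card {0..dst A v} \<le> card (verts A)"
    by (rule card_inj_on_le[OF _ _ va_finite[OF va]])
  then show ?thesis by simp
qed

definition esc :: "'v arena \<Rightarrow> nat \<Rightarrow> 'v strat" where
  "esc A i = (\<lambda>g. nxt A (last g i))"

lemma last_configs: "h \<noteq> [] \<Longrightarrow> set h \<subseteq> configs A n \<Longrightarrow> i < n \<Longrightarrow> last h i \<in> verts A"
proof -
  assume "h \<noteq> []" "set h \<subseteq> configs A n" "i < n"
  then have "last h \<in> configs A n" using last_in_set by blast
  then show ?thesis using \<open>i < n\<close> by (auto simp: configs_def)
qed

lemma esc_strat: assumes va: "valid_arena A" and i: "i < n" shows "is_strategy A n i (esc A i)"
proof (unfold is_strategy_def esc_def, intro allI impI)
  fix h :: "'a config list" assume "h \<noteq> [] \<and> set h \<subseteq> configs A n"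
  then have "last h i \<in> verts A" using last_configs i by blast
  then show "edg A (last h i) (nxt A (last h i)) \<noteq> None" using nxt_prop[OF va] by blast
qed

lemma profile_exists: "valid_arena A \<Longrightarrow> \<exists>\<sigma>. is_profile A n \<sigma>"
  by (intro exI[of _ "esc A"]) (simp add: is_profile_def esc_strat)

lemma escape:
  assumes va: "valid_arena A" and pr: "is_profile A n \<sigma>" and c: "c \<in> configs A n" and i: "i < n"
  shows "cost A n (\<sigma>(i := esc A i)) c i \<le> enat (Ybound A n)"
proof -
  define R where "R = outcome n (\<sigma>(i := esc A i)) c"
  have Rk: "R k i = (nxt A ^^ k) (c i)" for k
  proof (induction k)
    case 0 then show ?case by (simp add: R_def)
  next
    case (Suc k)
    have "R (Suc k) i = nxt A (R k i)"
      unfolding R_def using i by (simp add: outcome_Suc esc_def)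
    then show ?case using Suc by simp
  qed
  have ci: "c i \<in> verts A" using c i by (auto simp: configs_def)
  have vr: "vrun A n R" unfolding R_def
    by (rule outcome_vrun[OF va is_profile_upd[OF pr esc_strat[OF va i]] c])
  have "R (dst A (c i)) i = tgt A" using Rk nxt_iter_tgt[OF va ci] by simp
  then have "cost A n (\<sigma>(i := esc A i)) c i = enat (\<Sum>s<dst A (c i). tcost A n (R s) (R (Suc s)) i)"
    using costrun_at[OF va vr i] by (simp add: cost_costrun R_def)
  also have "(\<Sum>s<dst A (c i). tcost A n (R s) (R (Suc s)) i) \<le> dst A (c i) * kappa A n"
    using sum_bounded_above[of "{..<dst A (c i)}" "\<lambda>s. tcost A n (R s) (R (Suc s)) i" "kappa A n"]
      tcost_le_kappa[OF va _ i] vr by (simp add: vrun_def)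
  also have "dst A (c i) * kappa A n \<le> Ybound A n"
    unfolding Ybound_def using dist_lt_card[OF va ci] by simp
  finally show ?thesis by simp
qed

lemma val_le:
  assumes va: "valid_arena A" and c: "c \<in> configs A n" and i: "i < n"
  shows "val A n i c \<le> enat (Ybound A n)"
  unfolding val_def
proof (rule SUP_least)
  fix \<sigma> assume "\<sigma> \<in> {\<sigma>. is_profile A n \<sigma>}"
  then have "(INF \<tau>\<in>{\<tau>. is_strategy A n i \<tau>}. cost A n (\<sigma>(i := \<tau>)) c i) \<le> cost A n (\<sigma>(i := esc A i)) c i"
    using esc_strat[OF va i] by (intro INF_lower) simp
  also have "\<dots> \<le> enat (Ybound A n)" using escape[OF va _ c i] \<open>\<sigma> \<in> _\<close> by simp
  finally show "(INF \<tau>\<in>{\<tau>. is_strategy A n i \<tau>}. cost A n (\<sigma>(i := \<tau>)) c i) \<le> enat (Ybound A n)" .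
qed

lemma val_att:
  assumes va: "valid_arena A" and c: "c \<in> configs A n" and i: "i < n"
  shows "\<exists>P. is_profile A n P \<and> (\<forall>\<tau>. is_strategy A n i \<tau> \<longrightarrow> val A n i c \<le> cost A n (P(i := \<tau>)) c i)"
proof -
  define S where "S = (\<lambda>\<sigma>. INF \<tau>\<in>{\<tau>. is_strategy A n i \<tau>}. cost A n (\<sigma>(i := \<tau>)) c i) ` {\<sigma>. is_profile A n \<sigma>}"
  have ne: "S \<noteq> {}" using profile_exists[OF va] S_def by auto
  have bd: "y \<le> enat (Ybound A n)" if "y \<in> S" for y
  proof -
    from that obtain \<sigma> where \<sigma>: "is_profile A n \<sigma>" and y: "y = (INF \<tau>\<in>{\<tau>. is_strategy A n i \<tau>}. cost A n (\<sigma>(i := \<tau>)) c i)"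
      using S_def by auto
    have "y \<le> cost A n (\<sigma>(i := esc A i)) c i" unfolding y using esc_strat[OF va i] by (intro INF_lower) simp
    then show ?thesis using escape[OF va \<sigma> c i] by simp
  qed
  have fin: "finite S" using finite_enat_bounded bd by blast
  have "Sup S \<in> S" using Max_Sup[OF fin ne] Max_in[OF fin ne] by simp
  moreover have "val A n i c = Sup S" by (simp add: val_def S_def)
  ultimately obtain P where P: "is_profile A n P" "val A n i c = (INF \<tau>\<in>{\<tau>. is_strategy A n i \<tau>}. cost A n (P(i := \<tau>)) c i)"
    using S_def by auto
  then show ?thesis by (intro exI[of _ P]) (auto intro: INF_lower)
qed

lemma inf_att_enat:
  fixes f :: "'a \<Rightarrow> enat"
  assumes "S \<noteq> {}"
  shows "\<exists>x\<in>S. f x = (INF x\<in>S. f x)"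
proof -
  have "Inf (f ` S) \<in> f ` S"
    unfolding Inf_enat_def using assms by (auto intro: LeastI)
  then show ?thesis by force
qed

lemma val_fin:
  assumes va: "valid_arena A" and c: "c \<in> configs A n" and i: "i < n"
  shows "\<exists>v. val A n i c = enat v \<and> v \<le> Ybound A n"
proof -
  obtain v where v: "val A n i c = enat v" using val_le[OF assms] enat_ile by blast
  then show ?thesis using val_le[OF assms] by simp
qed




lemma src_configs: "valid_arena A \<Longrightarrow> cconst n (src A) \<in> configs A n"
  using va_src by (auto simp: cconst_def configs_def)
lemma tgt_configs: "valid_arena A \<Longrightarrow> cconst n (tgt A) \<in> configs A n"
  using va_tgt by (auto simp: cconst_def configs_def)

lemma ne_profile: "nash_eq A n \<sigma> \<Longrightarrow> is_profile A n \<sigma>"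
  by (simp add: nash_eq_def)

lemma ne_dev: "nash_eq A n \<sigma> \<Longrightarrow> i < n \<Longrightarrow> is_strategy A n i \<tau> \<Longrightarrow>
   cost A n \<sigma> (cconst n (src A)) i \<le> cost A n (\<sigma>(i := \<tau>)) (cconst n (src A)) i"
  by (simp add: nash_eq_def)

lemma ne_cost_bound:
  assumes va: "valid_arena A" and ne: "nash_eq A n \<sigma>" and i: "i < n"
  shows "cost A n \<sigma> (cconst n (src A)) i \<le> enat (Ybound A n)"
  using ne_dev[OF ne i esc_strat[OF va i]] escape[OF va ne_profile[OF ne] src_configs[OF va] i]
  by (rule order_trans)

lemma step_configs: "step A n c c' \<Longrightarrow> c \<in> configs A n \<and> c' \<in> configs A n"
  by (simp add: step_def)

lemma configs_ext: "c \<in> configs A n \<Longrightarrow> c' \<in> configs A n \<Longrightarrow> (\<And>j. j < n \<Longrightarrow> c j = c' j) \<Longrightarrow> c = c'"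
  unfolding configs_def by (rule PiE_ext) auto

lemma configs_restrict: "c \<in> configs A n \<Longrightarrow> (\<lambda>j\<in>{0..<n}. c j) = c"
  unfolding configs_def by (auto simp: PiE_def extensional_def)

lemma hist_configs: "(\<And>k. r k \<in> configs A n) \<Longrightarrow> set (hist r t) \<subseteq> configs A n"
  by (auto simp: hist_set)

lemma deviation:
  assumes va: "valid_arena A" and ne: "nash_eq A n \<sigma>" and i: "i < n"
    and dv: "c'' \<in> dev A n i (outcome n \<sigma> (cconst n (src A)) t) (outcome n \<sigma> (cconst n (src A)) (Suc t))"
  shows "cost A n \<sigma> (cconst n (src A)) i \<le>
     enat (\<Sum>s<t. tcost A n (outcome n \<sigma> (cconst n (src A)) s) (outcome n \<sigma> (cconst n (src A)) (Suc s)) i)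
     + enat (tcost A n (outcome n \<sigma> (cconst n (src A)) t) c'' i) + val A n i c''"
proof -
  define s0 where "s0 = cconst n (src A)"
  define c where "c = outcome n \<sigma> s0"
  have pr: "is_profile A n \<sigma>" using ne by (simp add: nash_eq_def)
  have s0c: "s0 \<in> configs A n" using src_configs[OF va] s0_def by simp
  have cc: "c k \<in> configs A n" for k using outcome_configs[OF va pr s0c] c_def by simp
  have dv': "step A n (c t) c''" "\<And>j. j < n \<Longrightarrow> j \<noteq> i \<Longrightarrow> c'' j = c (Suc t) j"
    using dv unfolding dev_def c_def s0_def by auto
  have c''c: "c'' \<in> configs A n" using dv'(1) step_configs by blast
  define h where "h = hist c t"
  have hc: "set h \<subseteq> configs A n" unfolding h_def using cc by (rule hist_configs)
  define \<rho>0 where "\<rho>0 = (\<lambda>j g. \<sigma> j (h @ g))"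
  have pr0: "is_profile A n \<rho>0"
    unfolding is_profile_def is_strategy_def
  proof (intro allI impI)
    fix j g assume j: "j < n" and g: "g \<noteq> [] \<and> set g \<subseteq> configs A n"
    have st: "is_strategy A n j (\<sigma> j)" using pr j by (simp add: is_profile_def)
    have "edg A (last (h @ g) j) (\<sigma> j (h @ g)) \<noteq> None"
      using st[unfolded is_strategy_def, rule_format, of "h @ g"] g hc by simp
    then show "edg A (last g j) (\<rho>0 j g) \<noteq> None" using g by (simp add: \<rho>0_def)
  qed
  have "{\<tau>. is_strategy A n i \<tau>} \<noteq> {}" using esc_strat[OF va i] by blast
  from inf_att_enat[OF this, of "\<lambda>\<tau>. cost A n (\<rho>0(i := \<tau>)) c'' i"]
  obtain \<tau>s where \<tau>s: "is_strategy A n i \<tau>s"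
    "cost A n (\<rho>0(i := \<tau>s)) c'' i = (INF \<tau>\<in>{\<tau>. is_strategy A n i \<tau>}. cost A n (\<rho>0(i := \<tau>)) c'' i)"
    by blast
  have cv: "cost A n (\<rho>0(i := \<tau>s)) c'' i \<le> val A n i c''"
    unfolding \<tau>s(2) val_def using pr0 by (intro SUP_upper) simp
  define \<tau> where "\<tau> = (\<lambda>g. if Suc t < length g \<and> take (Suc t) g = h \<and> g ! Suc t = c''
       then \<tau>s (drop (Suc t) g) else if g = h then c'' i else \<sigma> i g)"
  have st\<tau>: "is_strategy A n i \<tau>"
    unfolding is_strategy_def
  proof (intro allI impI)
    fix g assume g: "g \<noteq> [] \<and> set g \<subseteq> configs A n"
    have g1: "g \<noteq> []" and g2: "set g \<subseteq> configs A n" using g by auto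
    show "edg A (last g i) (\<tau> g) \<noteq> None"
    proof (cases "Suc t < length g \<and> take (Suc t) g = h \<and> g ! Suc t = c''")
      case True
      have "drop (Suc t) g \<noteq> []" using True by simp
      moreover have "set (drop (Suc t) g) \<subseteq> configs A n"
        using set_drop_subset[of "Suc t" g] g2 by (rule order_trans)
      ultimately have "edg A (last (drop (Suc t) g) i) (\<tau>s (drop (Suc t) g)) \<noteq> None"
        using \<tau>s(1)[unfolded is_strategy_def, rule_format, of "drop (Suc t) g"] by simp
      moreover have "last (drop (Suc t) g) = last g" using True by (simp add: last_drop)
      ultimately show ?thesis using True by (simp add: \<tau>_def)
    next
      case False
      show ?thesis
      proof (cases "g = h")
        case True
        have "edg A (c t i) (c'' i) \<noteq> None" using dv'(1) i by (simp add: step_def)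
        then show ?thesis using True False by (simp add: \<tau>_def h_def)
      next
        case False2: False
        have st: "is_strategy A n i (\<sigma> i)" using pr i by (simp add: is_profile_def)
        then have "edg A (last g i) (\<sigma> i g) \<noteq> None"
          using st[unfolded is_strategy_def, rule_format, of g] g1 g2 by simp
        moreover have "\<tau> g = \<sigma> i g" unfolding \<tau>_def if_not_P[OF False] if_not_P[OF False2] ..
        ultimately show ?thesis by simp
      qed
    qed
  qed
  define R where "R = outcome n (\<sigma>(i := \<tau>)) s0"
  have pr': "is_profile A n (\<sigma>(i := \<tau>))" by (rule is_profile_upd[OF pr st\<tau>])
  have R_Suc: "R (Suc k) = (\<lambda>j\<in>{0..<n}. (\<sigma>(i := \<tau>)) j (hist R k))" for k
    unfolding R_def by (rule outcome_Suc)
  have vrR: "vrun A n R" unfolding R_def by (rule outcome_vrun[OF va pr' s0c])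
  have R1a: "k \<le> t \<Longrightarrow> \<forall>j\<le>k. R j = c j" for k
  proof (induction k)
    case 0 then show ?case by (simp add: R_def c_def)
  next
    case (Suc k)
    then have IH: "\<forall>j\<le>k. R j = c j" by simp
    have hk: "hist R k = hist c k" using IH by (intro hist_cong) auto
    have "\<tau> (hist c k) = \<sigma> i (hist c k)"
    proof -
      have "length (hist c k) \<noteq> length h" using Suc.prems unfolding h_def by simp
      then have "hist c k \<noteq> h" by metis
      moreover have "\<not> Suc t < length (hist c k)" using Suc.prems by simp
      ultimately show ?thesis unfolding \<tau>_def by simp
    qed
    then have "R (Suc k) = (\<lambda>j\<in>{0..<n}. \<sigma> j (hist c k))"
      unfolding R_Suc hk by (intro restrict_ext) simp
    then have "R (Suc k) = c (Suc k)" by (simp add: c_def outcome_Suc)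
    then show ?case using IH le_Suc_eq by auto
  qed
  have R1: "\<forall>k\<le>t. R k = c k" using R1a by blast
  have hR: "hist R t = h" unfolding h_def using R1 by (intro hist_cong) auto
  have R2: "R (Suc t) = c''"
  proof -
    have "\<tau> h = c'' i" by (simp add: \<tau>_def h_def)
    then have "R (Suc t) = (\<lambda>j\<in>{0..<n}. (\<sigma>(i := \<tau>)) j h)"
      unfolding R_Suc hR by simp
    also have "\<dots> = (\<lambda>j\<in>{0..<n}. c'' j)"
    proof (rule restrict_ext)
      fix j assume "j \<in> {0..<n}"
      then show "(\<sigma>(i := \<tau>)) j h = c'' j"
        using dv'(2)[of j] \<open>\<tau> h = c'' i\<close> by (cases "j = i") (auto simp: c_def outcome_Suc h_def s0_def)
    qed
    also have "\<dots> = c''" by (rule configs_restrict[OF c''c])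
    finally show ?thesis .
  qed
  define R' where "R' = (\<lambda>m. R (Suc t + m))"
  have R3: "outcome n (\<rho>0(i := \<tau>s)) c'' = R'"
  proof (rule outcome_unique)
    show "R' 0 = c''" using R2 by (simp add: R'_def)
    fix m
    have ha: "hist R (Suc t + m) = h @ hist R' m" unfolding R'_def using hist_append[of R t m] hR by simp
    have eq: "(\<sigma>(i := \<tau>)) j (hist R (Suc t + m)) = (\<rho>0(i := \<tau>s)) j (hist R' m)" for j
    proof (cases "j = i")
      case True
      have hne: "hist R' m \<noteq> []" by simp
      have "Suc t < length (h @ hist R' m)" by (simp add: h_def)
      moreover have "take (Suc t) (h @ hist R' m) = h" by (simp add: h_def)
      moreover have "(h @ hist R' m) ! Suc t = c''"
        using R2 by (simp add: h_def nth_append R'_def)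
      ultimately have "\<tau> (h @ hist R' m) = \<tau>s (hist R' m)"
        by (simp add: \<tau>_def h_def)
      then show ?thesis using True ha by simp
    next
      case False
      then show ?thesis using ha by (simp add: \<rho>0_def)
    qed
    have "R' (Suc m) = R (Suc (Suc t + m))" by (simp add: R'_def)
    also have "\<dots> = (\<lambda>j\<in>{0..<n}. (\<sigma>(i := \<tau>)) j (hist R (Suc t + m)))"
      by (rule R_Suc)
    also have "\<dots> = (\<lambda>j\<in>{0..<n}. (\<rho>0(i := \<tau>s)) j (hist R' m))"
      using eq by simp
    finally show "R' (Suc m) = (\<lambda>j\<in>{0..<n}. (\<rho>0(i := \<tau>s)) j (hist R' m))" .
  qed
  have "cost A n (\<sigma>(i := \<tau>)) s0 i = enat (\<Sum>s<Suc t. tcost A n (R s) (R (Suc s)) i) + costrun A n R' i"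
    unfolding cost_costrun R_def[symmetric] R'_def using costrun_split[OF va vrR i, of "Suc t"] by simp
  also have "(\<Sum>s<Suc t. tcost A n (R s) (R (Suc s)) i) =
      (\<Sum>s<t. tcost A n (c s) (c (Suc s)) i) + tcost A n (c t) c'' i"
  proof -
    have "(\<Sum>s<t. tcost A n (R s) (R (Suc s)) i) = (\<Sum>s<t. tcost A n (c s) (c (Suc s)) i)"
      using R1 by (intro sum.cong) auto
    then show ?thesis using R1 R2 by simp
  qed
  also have "costrun A n R' i = cost A n (\<rho>0(i := \<tau>s)) c'' i" using R3 by (simp add: cost_costrun)
  finally have eqc: "cost A n (\<sigma>(i := \<tau>)) s0 i = enat ((\<Sum>s<t. tcost A n (c s) (c (Suc s)) i) + tcost A n (c t) c'' i) + cost A n (\<rho>0(i := \<tau>s)) c'' i" .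
  have "cost A n (\<sigma>(i := \<tau>)) s0 i \<le> enat ((\<Sum>s<t. tcost A n (c s) (c (Suc s)) i) + tcost A n (c t) c'' i) + val A n i c''"
    unfolding eqc by (rule add_left_mono[OF cv])
  then have "cost A n (\<sigma>(i := \<tau>)) s0 i \<le>
      enat (\<Sum>s<t. tcost A n (c s) (c (Suc s)) i) + enat (tcost A n (c t) c'' i) + val A n i c''"
    by (simp only: plus_enat_simps(1)[symmetric])
  moreover have "cost A n \<sigma> s0 i \<le> cost A n (\<sigma>(i := \<tau>)) s0 i"
    using ne_dev[OF ne i st\<tau>] s0_def by simp
  ultimately show ?thesis unfolding c_def s0_def by (rule order_trans[rotated])
qed




primrec itb :: "nat \<Rightarrow> (nat \<Rightarrow> enat \<Rightarrow> nat \<Rightarrow> enat) \<Rightarrow> nat \<Rightarrow> nat \<Rightarrow> enat" where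
  "itb n F 0 = (\<lambda>i\<in>{0..<n}. \<infinity>)"
| "itb n F (Suc t) = (\<lambda>i\<in>{0..<n}. F t (itb n F t i) i)"

lemma finite_configs: "valid_arena A \<Longrightarrow> finite (configs A n)"
  unfolding configs_def using va_finite by (intro finite_PiE) auto

lemma ereal_enat: "ereal_of_enat (enat x) = ereal (real x)"
  by simp

lemma ne_reach_all:
  assumes va: "valid_arena A" and ne: "nash_eq A n \<sigma>"
  shows "\<exists>T. outcome n \<sigma> (cconst n (src A)) T = cconst n (tgt A)"
proof -
  define c where "c = outcome n \<sigma> (cconst n (src A))"
  have pr: "is_profile A n \<sigma>" using ne by (simp add: nash_eq_def)
  have cc: "c k \<in> configs A n" for k using outcome_configs[OF va pr src_configs[OF va]] c_def by simp
  have vr: "vrun A n c" using outcome_vrun[OF va pr src_configs[OF va]] c_def by simp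
  have ex: "\<exists>k. c k i = tgt A" if i: "i < n" for i
  proof (rule ccontr)
    assume "\<not> (\<exists>k. c k i = tgt A)"
    then have "cost A n \<sigma> (cconst n (src A)) i = \<infinity>"
      unfolding cost_costrun c_def[symmetric] costrun_def by simp
    then show False using ne_cost_bound[OF va ne i] by simp
  qed
  define T where "T = (\<Sum>i<n. LEAST k. c k i = tgt A)"
  have "c T i = tgt A" if i: "i < n" for i
  proof -
    define L where "L = (LEAST k. c k i = tgt A)"
    have L: "c L i = tgt A" unfolding L_def by (rule LeastI_ex[OF ex[OF i]])
    have "L \<le> T" unfolding T_def L_def by (rule member_le_sum) (use i in auto)
    then show ?thesis using absorb_run[OF va vr i L, of "T - L"] by simp
  qed
  then have "c T = cconst n (tgt A)"
    by (intro configs_ext[OF cc tgt_configs[OF va]]) (simp add: cconst_def)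
  then show ?thesis unfolding c_def by blast
qed

lemma ne_path:
  assumes va: "valid_arena A" and ne: "nash_eq A n \<sigma>"
  shows "\<exists>vs zs. G_path A n \<gamma> vs zs \<and> ereal (sum_list zs) = wsc A n \<gamma> \<sigma>"
proof -
  define s0 where "s0 = cconst n (src A)"
  define c where "c = outcome n \<sigma> s0"
  have pr: "is_profile A n \<sigma>" using ne by (simp add: nash_eq_def)
  have s0c: "s0 \<in> configs A n" using src_configs[OF va] s0_def by simp
  have cc: "c k \<in> configs A n" for k using outcome_configs[OF va pr s0c] c_def by simp
  have vr: "vrun A n c" using outcome_vrun[OF va pr s0c] c_def by simp
  obtain T where cT: "c T = cconst n (tgt A)" using ne_reach_all[OF va ne] c_def s0_def by blast
  define W where "W t i = tcost A n (c t) (c (Suc t)) i" for t i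
  define rest where "rest t i = (\<Sum>s\<in>{t..<T}. W s i)" for t i
  have cTi: "c T i = tgt A" if "i < n" for i using cT that by (simp add: cconst_def)
  have costT: "cost A n \<sigma> s0 i = enat (\<Sum>s<T. W s i)" if i: "i < n" for i
    unfolding cost_costrun c_def[symmetric] W_def using costrun_at[OF va vr i cTi[OF i]] .
  have restrel: "rest t i = W t i + rest (Suc t) i" if "t < T" for t i
    unfolding rest_def using that by (simp add: sum.atLeast_Suc_lessThan)
  have sumsplit: "(\<Sum>s<T. W s i) = (\<Sum>s<t. W s i) + rest t i" if "t \<le> T" for t i
    unfolding rest_def lessThan_atLeast0 using sum.atLeastLessThan_concat[of 0 t T "\<lambda>s. W s i"] that by simp
  have keyineq: "enat (rest t i) \<le> enat (tcost A n (c t) c'' i) + val A n i c''"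
    if t: "t \<le> T" and i: "i < n" and dv: "c'' \<in> dev A n i (c t) (c (Suc t))" for t i c''
  proof -
    have dv': "c'' \<in> dev A n i (outcome n \<sigma> (cconst n (src A)) t) (outcome n \<sigma> (cconst n (src A)) (Suc t))"
      using dv by (simp only: c_def s0_def)
    have h1: "cost A n \<sigma> s0 i \<le> enat (\<Sum>s<t. W s i) + enat (tcost A n (c t) c'' i) + val A n i c''"
      using deviation[OF va ne i dv'] by (simp only: c_def s0_def W_def)
    have h2: "cost A n \<sigma> s0 i = enat (\<Sum>s<t. W s i) + enat (rest t i)"
      by (simp add: costT[OF i] sumsplit[OF t])
    have "enat (\<Sum>s<t. W s i) + enat (rest t i) \<le> enat (\<Sum>s<t. W s i) + (enat (tcost A n (c t) c'' i) + val A n i c'')"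
      using h1 unfolding h2 by (simp only: add.assoc)
    then show ?thesis by (simp only: enat_add_left_cancel_le) simp
  qed
  define Dt where "Dt t i = (INF c''\<in>dev A n i (c t) (c (Suc t)).
                  ereal (real (tcost A n (c t) c'' i)) + ereal_of_enat (val A n i c'')
                  - ereal (real (tcost A n (c t) (c (Suc t)) i)))" for t i
  have devne: "c (Suc t) \<in> dev A n i (c t) (c (Suc t))" for t i
    using vr unfolding dev_def vrun_def by simp
  have devfin: "finite (dev A n i (c t) (c (Suc t)))" for t i
    by (rule finite_subset[OF _ finite_configs[OF va]]) (auto simp: dev_def step_def)
  have D_ge: "ereal (real (rest t i)) - ereal (real (W t i)) \<le> Dt t i" if t: "t \<le> T" and i: "i < n" for t i
    unfolding Dt_def
  proof (rule INF_greatest)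
    fix c'' assume dv: "c'' \<in> dev A n i (c t) (c (Suc t))"
    have "ereal_of_enat (enat (rest t i)) \<le> ereal_of_enat (enat (tcost A n (c t) c'' i) + val A n i c'')"
      by (subst ereal_of_enat_le_iff) (rule keyineq[OF t i dv])
    then have "ereal (real (rest t i)) \<le> ereal (real (tcost A n (c t) c'' i)) + ereal_of_enat (val A n i c'')"
      by (simp only: ereal_of_enat_add ereal_enat)
    then show "ereal (real (rest t i)) - ereal (real (W t i)) \<le> ereal (real (tcost A n (c t) c'' i)) + ereal_of_enat (val A n i c'')
                  - ereal (real (tcost A n (c t) (c (Suc t)) i))"
      unfolding W_def by (rule ereal_minus_mono) simp
  qed
  have D_att: "\<exists>d::int. Dt t i = ereal (real_of_int d) \<and> d \<le> int (Ybound A n)" if i: "i < n" for t i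
  proof -
    let ?f = "\<lambda>c''. ereal (real (tcost A n (c t) c'' i)) + ereal_of_enat (val A n i c'')
                  - ereal (real (tcost A n (c t) (c (Suc t)) i))"
    let ?S = "?f ` dev A n i (c t) (c (Suc t))"
    have fS: "finite ?S" using devfin by simp
    have nS: "?S \<noteq> {}" using devne by blast
    have "Inf ?S \<in> ?S" using Min_Inf[OF fS nS] Min_in[OF fS nS] by simp
    then obtain c0 where c0: "c0 \<in> dev A n i (c t) (c (Suc t))" and D0: "Dt t i = ?f c0"
      unfolding Dt_def by auto
    have c0c: "c0 \<in> configs A n" using c0 by (simp add: dev_def step_def)
    obtain v0 where v0: "val A n i c0 = enat v0" using val_fin[OF va c0c i] by blast
    define d where "d = int (tcost A n (c t) c0 i) + int v0 - int (tcost A n (c t) (c (Suc t)) i)"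
    have Dd: "Dt t i = ereal (real_of_int d)" unfolding D0 v0 d_def by simp
    have "Dt t i \<le> ?f (c (Suc t))" unfolding Dt_def by (rule INF_lower[OF devne])
    also have "\<dots> = ereal_of_enat (val A n i (c (Suc t)))"
      using val_fin[OF va cc i, of "Suc t"] by auto
    also have "\<dots> \<le> ereal (real (Ybound A n))" using val_le[OF va cc i, of "Suc t"] by (simp add: ereal_enat[symmetric] del: ereal_of_enat_simps)
    finally have "d \<le> int (Ybound A n)" unfolding Dd by simp
    then show ?thesis using Dd by blast
  qed
  define P where "P t \<beta> i e \<longleftrightarrow> e \<le> enat (Ybound A n) \<and>
      ereal_of_enat e = min (ereal_of_enat \<beta> - ereal (real (W t i))) (Dt t i) \<and>
      (\<exists>x. e = enat x \<and> rest (Suc t) i \<le> x)" for t \<beta> i e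
  have bstep: "\<exists>e. P t \<beta> i e"
    if t: "t < T" and i: "i < n" and \<beta>: "\<beta> = \<infinity> \<or> (\<exists>x. \<beta> = enat x \<and> rest t i \<le> x)" for t \<beta> i
  proof -
    obtain d where Dd: "Dt t i = ereal (real_of_int d)" and dY: "d \<le> int (Ybound A n)" using D_att[OF i] by blast
    have rd: "int (rest (Suc t) i) \<le> d"
    proof -
      have "ereal (real (rest t i)) - ereal (real (W t i)) \<le> ereal (real_of_int d)"
        using D_ge[of t i] t i Dd by simp
      then have "real (rest t i) - real (W t i) \<le> real_of_int d" by simp
      then show ?thesis using restrel[OF t, of i] by simp
    qed
    obtain m :: int where m: "min (ereal_of_enat \<beta> - ereal (real (W t i))) (Dt t i) = ereal (real_of_int m)"
      and mr: "int (rest (Suc t) i) \<le> m" and mY: "m \<le> int (Ybound A n)"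
    proof (cases "\<beta> = \<infinity>")
      case True
      then show ?thesis using that[of d] Dd rd dY by simp
    next
      case False
      then obtain x where x: "\<beta> = enat x" "rest t i \<le> x" using \<beta> by blast
      have "min (ereal_of_enat \<beta> - ereal (real (W t i))) (Dt t i)
          = ereal (real_of_int (min (int x - int (W t i)) d))"
        unfolding x(1) Dd by (simp add: min_def)
      moreover have "int (rest (Suc t) i) \<le> min (int x - int (W t i)) d"
        using rd x(2) restrel[OF t, of i] by simp
      moreover have "min (int x - int (W t i)) d \<le> int (Ybound A n)" using dY by simp
      ultimately show ?thesis using that by blast
    qed
    have "P t \<beta> i (enat (nat m))"
    proof -
      have m0: "0 \<le> m" using mr by linarith
      have "nat m \<le> Ybound A n" using mY by linarith
      moreover have "rest (Suc t) i \<le> nat m" using mr by linarith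
      ultimately show ?thesis unfolding P_def using m m0 by simp
    qed
    then show ?thesis by blast
  qed
  define F where "F t \<beta> i = (SOME e. P t \<beta> i e)" for t \<beta> i
  define B where "B = itb n F"
  have Binv: "t \<le> T \<Longrightarrow> \<forall>i<n. B t i = \<infinity> \<or> (\<exists>x. B t i = enat x \<and> rest t i \<le> x)" for t
  proof (induction t)
    case 0 then show ?case by (simp add: B_def)
  next
    case (Suc t)
    show ?case
    proof (intro allI impI)
      fix i assume i: "i < n"
      have "P t (B t i) i (F t (B t i) i)" unfolding F_def
        by (rule someI_ex[OF bstep]) (use Suc i in auto)
      then show "B (Suc t) i = \<infinity> \<or> (\<exists>x. B (Suc t) i = enat x \<and> rest (Suc t) i \<le> x)"
        using i by (simp add: B_def P_def)
    qed
  qed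
  have BP: "P t (B t i) i (B (Suc t) i)" if t: "t < T" and i: "i < n" for t i
  proof -
    have "P t (B t i) i (F t (B t i) i)" unfolding F_def
      by (rule someI_ex[OF bstep]) (use Binv[of t] t i in auto)
    then show ?thesis using i by (simp add: B_def)
  qed
  have Bbud: "B t \<in> budgets A n" if "t \<le> T" for t
  proof (cases t)
    case 0 then show ?thesis by (simp add: B_def budgets_def)
  next
    case (Suc t')
    have "B (Suc t') i \<le> enat (Ybound A n)" if "i < n" for i
      using BP[of t' i] Suc \<open>t \<le> T\<close> that by (simp add: P_def)
    then show ?thesis unfolding budgets_def using Suc by (auto simp: B_def)
  qed
  define vs where "vs = map (\<lambda>t. (c t, B t)) [0..<Suc T]"
  define zs where "zs = map (\<lambda>t. \<Sum>i<n. \<gamma> i * real (W t i)) [0..<T]"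
  have vsn: "vs ! k = (c k, B k)" if "k \<le> T" for k
    unfolding vs_def using that by (simp add: nth_map_upt del: upt_Suc)
  have zsn: "zs ! k = (\<Sum>i<n. \<gamma> i * real (W k i))" if "k < T" for k
    unfolding zs_def using that by (simp add: nth_map_upt)
  have gp: "G_path A n \<gamma> vs zs"
    unfolding G_path_def
  proof (intro conjI allI impI)
    show "vs \<noteq> []" by (simp add: vs_def del: upt_Suc)
    show "length vs = length zs + 1" by (simp add: vs_def zs_def del: upt_Suc)
    show "hd vs = (cconst n (src A), \<lambda>i\<in>{0..<n}. \<infinity>)"
      by (simp add: vs_def hd_map B_def c_def s0_def del: upt_Suc)
    show "fst (last vs) = cconst n (tgt A)"
      using cT by (simp add: vs_def last_map del: upt_Suc)
    fix k assume k: "k < length zs"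
    then have kT: "k < T" by (simp add: zs_def)
    have v1: "vs ! k = (c k, B k)" using kT vsn[of k] by simp
    have v2: "vs ! Suc k = (c (Suc k), B (Suc k))" using kT vsn[of "Suc k"] by simp
    show "Gedge A n \<gamma> (vs ! k) (zs ! k) (vs ! Suc k)"
      unfolding v1 v2 zsn[OF kT] Gedge_def Gverts_def
      using kT cc[of k] cc[of "Suc k"] Bbud[of k] Bbud[of "Suc k"] vr BP[OF kT]
      by (simp add: vrun_def P_def W_def Dt_def)
  qed
  have "wsc A n \<gamma> \<sigma> = (\<Sum>k<n. ereal (\<gamma> k * real (\<Sum>t<T. W t k)))"
    unfolding wsc_def s0_def[symmetric] by (intro sum.cong refl) (simp add: costT)
  also have "\<dots> = ereal (\<Sum>k<n. \<Sum>t<T. \<gamma> k * real (W t k))"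
    by (simp add: sum_distrib_left)
  also have "\<dots> = ereal (sum_list zs)"
    unfolding zs_def sum_set_upt_conv_sum_list_nat[symmetric] atLeast0LessThan
    by (simp add: lessThan_atLeast0) (rule sum.swap)
  finally show ?thesis using gp by metis
qed




lemma le_minus_ereal: "(x::ereal) \<le> y - ereal w \<Longrightarrow> x + ereal w \<le> y"
  by (cases x; cases y) auto

definition devat :: "'v arena \<Rightarrow> nat \<Rightarrow> (nat \<Rightarrow> 'v config) \<Rightarrow> 'v config list \<Rightarrow> nat \<Rightarrow> nat \<Rightarrow> bool" where
  "devat A n cc g d i \<longleftrightarrow> 0 < d \<and> d < length g \<and> take d g = hist cc (d - 1) \<and> i < n \<and>
     g ! d \<in> dev A n i (cc (d - 1)) (cc d) \<and> g ! d \<noteq> cc d"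

lemma devat_d_unique:
  assumes "devat A n cc g d1 i1" "devat A n cc g d2 i2" "d1 < d2"
  shows False
proof -
  have "take d2 g = hist cc (d2 - 1)" using assms(2) by (simp add: devat_def)
  then have "take d2 g ! d1 = cc d1" using assms(3) by simp
  then have "g ! d1 = cc d1" using assms(3) by simp
  then show False using assms(1) by (simp add: devat_def)
qed

lemma devat_unique:
  assumes cc: "\<And>k. cc k \<in> configs A n" and a: "devat A n cc g d1 i1" and b: "devat A n cc g d2 i2"
  shows "d1 = d2 \<and> i1 = i2"
proof -
  have d: "d1 = d2" using devat_d_unique[OF a b] devat_d_unique[OF b a] by (meson linorder_neqE_nat)
  have gc: "g ! d1 \<in> configs A n" using a by (simp add: devat_def dev_def step_def)
  have "g ! d1 \<noteq> cc d1" using a by (simp add: devat_def)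
  then obtain j where j: "j < n" "(g ! d1) j \<noteq> cc d1 j" using configs_ext[OF gc cc] by blast
  have "j = i1" using a j d by (auto simp: devat_def dev_def)
  moreover have "j = i2" using b j d by (auto simp: devat_def dev_def)
  ultimately show ?thesis using d by simp
qed

locale gp_ctx =
  fixes A :: "'v arena" and n :: nat and \<gamma> :: "nat \<Rightarrow> real" and vs zs
  assumes va: "valid_arena A" and gp: "G_path A n \<gamma> vs zs"
begin

definition L where "L = length zs"
definition cf where "cf t = fst (vs ! t)"
definition bf where "bf t = snd (vs ! t)"
definition cc where "cc t = (if t \<le> L then cf t else cconst n (tgt A))"
definition W where "W t i = tcost A n (cc t) (cc (Suc t)) i"
definition rest where "rest t i = (\<Sum>s\<in>{t..<L}. W s i)"

lemma vs_nth: "vs ! t = (cf t, bf t)" by (simp add: cf_def bf_def)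

lemma Ge: "t < L \<Longrightarrow> cf t \<in> configs A n \<and> cf (Suc t) \<in> configs A n \<and> bf t \<in> budgets A n \<and>
   step A n (cf t) (cf (Suc t)) \<and> zs ! t = (\<Sum>i<n. \<gamma> i * real (tcost A n (cf t) (cf (Suc t)) i)) \<and>
   (\<forall>i<n. ereal_of_enat (bf (Suc t) i) =
           min (ereal_of_enat (bf t i) - ereal (real (tcost A n (cf t) (cf (Suc t)) i)))
               (INF c''\<in>dev A n i (cf t) (cf (Suc t)).
                  ereal (real (tcost A n (cf t) c'' i)) + ereal_of_enat (val A n i c'')
                  - ereal (real (tcost A n (cf t) (cf (Suc t)) i))))"
proof -
  assume t: "t < L"
  have "Gedge A n \<gamma> (vs ! t) (zs ! t) (vs ! Suc t)" using gp t by (simp add: G_path_def L_def)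
  then show ?thesis unfolding vs_nth Gedge_def Gverts_def by simp
qed

lemma cf0: "cf 0 = cconst n (src A)"
proof -
  have "vs \<noteq> []" "hd vs = (cconst n (src A), \<lambda>i\<in>{0..<n}. \<infinity>)" using gp by (auto simp: G_path_def)
  then show ?thesis by (simp add: cf_def hd_conv_nth)
qed

lemma cfL: "cf L = cconst n (tgt A)"
proof -
  have "vs \<noteq> []" "fst (last vs) = cconst n (tgt A)" "length vs = L + 1" using gp by (auto simp: G_path_def L_def)
  then show ?thesis by (simp add: cf_def last_conv_nth)
qed

lemma cc0: "cc 0 = cconst n (src A)" by (simp add: cc_def cf0)

lemma cc_ge: "L \<le> t \<Longrightarrow> cc t = cconst n (tgt A)"
  by (cases "t = L") (auto simp: cc_def cfL)

lemma cc_step: "step A n (cc t) (cc (Suc t))"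
proof (cases "t < L")
  case True then show ?thesis using Ge[OF True] by (simp add: cc_def)
next
  case False
  then have "cc t = cconst n (tgt A)" "cc (Suc t) = cconst n (tgt A)" using cc_ge by auto
  then show ?thesis using tgt_configs[OF va] va_tgt_loop[OF va] by (simp add: step_def cconst_def)
qed

lemma cc_vrun: "vrun A n cc" using cc_step by (simp add: vrun_def)
lemma cc_configs: "cc t \<in> configs A n" using cc_step[of t] by (simp add: step_def)

lemma cc_tgt: "i < n \<Longrightarrow> cc L i = tgt A" using cc_ge[of L] by (simp add: cconst_def)

lemma W_Ge: "t < L \<Longrightarrow> i < n \<Longrightarrow>
   ereal_of_enat (bf (Suc t) i) \<le> ereal_of_enat (bf t i) - ereal (real (W t i)) \<and>
   (\<forall>c''\<in>dev A n i (cc t) (cc (Suc t)). ereal_of_enat (bf (Suc t) i) \<le>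
       ereal (real (tcost A n (cc t) c'' i)) + ereal_of_enat (val A n i c'') - ereal (real (W t i)))"
proof -
  assume t: "t < L" and i: "i < n"
  have cct: "cc t = cf t" "cc (Suc t) = cf (Suc t)" using t by (auto simp: cc_def)
  have e: "ereal_of_enat (bf (Suc t) i) =
           min (ereal_of_enat (bf t i) - ereal (real (W t i)))
               (INF c''\<in>dev A n i (cc t) (cc (Suc t)).
                  ereal (real (tcost A n (cc t) c'' i)) + ereal_of_enat (val A n i c'')
                  - ereal (real (W t i)))"
    using Ge[OF t] i unfolding W_def cct by simp
  show ?thesis
  proof (intro conjI ballI)
    show "ereal_of_enat (bf (Suc t) i) \<le> ereal_of_enat (bf t i) - ereal (real (W t i))"
      unfolding e by (rule min.cobounded1)
    fix c'' assume "c'' \<in> dev A n i (cc t) (cc (Suc t))"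
    then show "ereal_of_enat (bf (Suc t) i) \<le>
       ereal (real (tcost A n (cc t) c'' i)) + ereal_of_enat (val A n i c'') - ereal (real (W t i))"
      unfolding e by (intro min.coboundedI2 INF_lower)
  qed
qed

lemma rest_Suc: "t < L \<Longrightarrow> rest t i = W t i + rest (Suc t) i"
  unfolding rest_def by (simp add: sum.atLeast_Suc_lessThan)

lemma bl: "t \<le> L \<Longrightarrow> i < n \<Longrightarrow> ereal (real (rest t i)) \<le> ereal_of_enat (bf t i)"
proof (induction "L - t" arbitrary: t)
  case 0
  then have "rest t i = 0" by (simp add: rest_def)
  then show ?case using ereal_of_enat_nonneg[of "bf t i"] by (simp add: zero_ereal_def)
next
  case (Suc x)
  then have t: "t < L" by simp
  have ih: "ereal (real (rest (Suc t) i)) \<le> ereal_of_enat (bf (Suc t) i)"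
    using Suc.hyps(1)[of "Suc t"] Suc.hyps(2) Suc.prems t by simp
  also have "\<dots> \<le> ereal_of_enat (bf t i) - ereal (real (W t i))" using W_Ge[OF t Suc.prems(2)] by simp
  finally have "ereal (real (rest (Suc t) i)) + ereal (real (W t i)) \<le> ereal_of_enat (bf t i)"
    by (rule le_minus_ereal)
  then show ?case using rest_Suc[OF t, of i] by (simp add: add.commute)
qed

lemma key:
  assumes t: "t < L" and i: "i < n" and dv: "c'' \<in> dev A n i (cc t) (cc (Suc t))"
  shows "enat (rest t i) \<le> enat (tcost A n (cc t) c'' i) + val A n i c''"
proof -
  have c''c: "c'' \<in> configs A n" using dv by (simp add: dev_def step_def)
  obtain v where v: "val A n i c'' = enat v" using val_fin[OF va c''c i] by blast
  have "ereal (real (rest (Suc t) i)) \<le> ereal_of_enat (bf (Suc t) i)" using bl[of "Suc t" i] t i by simp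
  also have "\<dots> \<le> ereal (real (tcost A n (cc t) c'' i)) + ereal_of_enat (val A n i c'') - ereal (real (W t i))"
    using W_Ge[OF t i] dv by blast
  finally have "real (rest (Suc t) i) \<le> real (tcost A n (cc t) c'' i) + real v - real (W t i)"
    unfolding v by simp
  then have "rest t i \<le> tcost A n (cc t) c'' i + v" using rest_Suc[OF t, of i] by simp
  then show ?thesis unfolding v by simp
qed

definition Pun where "Pun i c'' = (SOME P. is_profile A n P \<and>
   (\<forall>\<tau>. is_strategy A n i \<tau> \<longrightarrow> val A n i c'' \<le> cost A n (P(i := \<tau>)) c'' i))"

lemma Pun: assumes c: "c'' \<in> configs A n" and i: "i < n" shows "is_profile A n (Pun i c'') \<and>
   (\<forall>\<tau>. is_strategy A n i \<tau> \<longrightarrow> val A n i c'' \<le> cost A n ((Pun i c'')(i := \<tau>)) c'' i)"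
  unfolding Pun_def using someI_ex[OF val_att[OF va c i]] .

definition sig where "sig j g = (if g \<noteq> [] \<and> g = hist cc (length g - 1) then cc (length g) j
   else if \<exists>d i. devat A n cc g d i then
     (case (SOME (d, i). devat A n cc g d i) of (d, i) \<Rightarrow> Pun i (g ! d) j (drop d g))
   else nxt A (last g j))"

lemma sig_devat:
  assumes nonp: "\<not> (g \<noteq> [] \<and> g = hist cc (length g - 1))" and dv: "devat A n cc g d i"
  shows "sig j g = Pun i (g ! d) j (drop d g)"
proof -
  have ex: "\<exists>p. case p of (d, i) \<Rightarrow> devat A n cc g d i" using dv by auto
  obtain d' i' where p: "(SOME (d, i). devat A n cc g d i) = (d', i')" by fastforce
  have "case (SOME (d, i). devat A n cc g d i) of (d, i) \<Rightarrow> devat A n cc g d i"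
    by (rule someI_ex[OF ex])
  then have "devat A n cc g d' i'" using p by simp
  then have "d' = d \<and> i' = i" using devat_unique[OF cc_configs _ dv] by blast
  then show ?thesis unfolding sig_def using nonp dv p by auto
qed

lemma sig_onp: "sig j (hist cc k) = cc (Suc k) j"
  unfolding sig_def by simp

lemma sig_profile: "is_profile A n sig"
  unfolding is_profile_def is_strategy_def
proof (intro allI impI)
  fix j g assume j: "j < n" and g: "g \<noteq> [] \<and> set g \<subseteq> configs A n"
  have g1: "g \<noteq> []" and g2: "set g \<subseteq> configs A n" using g by auto
  show "edg A (last g j) (sig j g) \<noteq> None"
  proof (cases "g \<noteq> [] \<and> g = hist cc (length g - 1)")
    case True
    then have "last g = cc (length g - 1)" by (metis hist_last)
    moreover have "sig j g = cc (Suc (length g - 1)) j" using True sig_onp by metis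
    ultimately show ?thesis using cc_step[of "length g - 1"] j by (simp add: step_def)
  next
    case nonp: False
    show ?thesis
    proof (cases "\<exists>d i. devat A n cc g d i")
      case True
      then obtain d i where dv: "devat A n cc g d i" by blast
      have gd: "g ! d \<in> configs A n" using dv by (simp add: devat_def dev_def step_def)
      have i: "i < n" using dv by (simp add: devat_def)
      have st: "is_strategy A n j (Pun i (g ! d) j)" using Pun[OF gd i] j by (simp add: is_profile_def)
      have "drop d g \<noteq> []" using dv by (simp add: devat_def)
      moreover have "set (drop d g) \<subseteq> configs A n" using set_drop_subset[of d g] g2 by (rule order_trans)
      ultimately have "edg A (last (drop d g) j) (Pun i (g ! d) j (drop d g)) \<noteq> None"
        using st[unfolded is_strategy_def, rule_format, of "drop d g"] by simp
      moreover have "last (drop d g) = last g" using dv by (simp add: devat_def last_drop)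
      ultimately show ?thesis using sig_devat[OF nonp dv] by simp
    next
      case False
      have "last g j \<in> verts A" using last_configs[OF g1 g2 j] .
      then have "edg A (last g j) (nxt A (last g j)) \<noteq> None" using nxt_prop[OF va] by blast
      moreover have "sig j g = nxt A (last g j)" unfolding sig_def if_not_P[OF nonp] if_not_P[OF False] ..
      ultimately show ?thesis by simp
    qed
  qed
qed

lemma sig_outcome: "outcome n sig (cconst n (src A)) = cc"
proof (rule outcome_unique)
  show "cc 0 = cconst n (src A)" by (rule cc0)
  fix k
  show "cc (Suc k) = (\<lambda>i\<in>{0..<n}. sig i (hist cc k))"
    unfolding sig_onp using configs_restrict[OF cc_configs, of "Suc k"] by simp
qed

lemma sig_cost: "i < n \<Longrightarrow> cost A n sig (cconst n (src A)) i = enat (\<Sum>s<L. W s i)"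
  unfolding cost_costrun sig_outcome W_def by (rule costrun_at[OF va cc_vrun _ cc_tgt])

end




context gp_ctx begin

lemma sumsplit: "t \<le> L \<Longrightarrow> (\<Sum>s<L. W s i) = (\<Sum>s<t. W s i) + rest t i"
  unfolding rest_def lessThan_atLeast0 using sum.atLeastLessThan_concat[of 0 t L "\<lambda>s. W s i"] by simp

lemma sig_ne: "nash_eq A n sig"
  unfolding nash_eq_def
proof (intro conjI allI impI)
  show "is_profile A n sig" by (rule sig_profile)
  fix i0 \<tau> assume i0: "i0 < n" and st: "is_strategy A n i0 \<tau>"
  define s0 where "s0 = cconst n (src A)"
  have s0c: "s0 \<in> configs A n" using src_configs[OF va] s0_def by simp
  define R where "R = outcome n (sig(i0 := \<tau>)) s0"
  have pr': "is_profile A n (sig(i0 := \<tau>))" by (rule is_profile_upd[OF sig_profile st])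
  have vrR: "vrun A n R" unfolding R_def by (rule outcome_vrun[OF va pr' s0c])
  have Rc: "R k \<in> configs A n" for k unfolding R_def by (rule outcome_configs[OF va pr' s0c])
  have R_Suc: "R (Suc k) = (\<lambda>j\<in>{0..<n}. (sig(i0 := \<tau>)) j (hist R k))" for k
    unfolding R_def by (rule outcome_Suc)
  have csig: "cost A n sig s0 i0 = enat (\<Sum>s<L. W s i0)" using sig_cost[OF i0] s0_def by simp
  show "cost A n sig (cconst n (src A)) i0 \<le> cost A n (sig(i0 := \<tau>)) (cconst n (src A)) i0"
  proof (cases "\<forall>k. R k = cc k")
    case True
    then have "R = cc" by auto
    then have "cost A n (sig(i0 := \<tau>)) s0 i0 = cost A n sig s0 i0"
      unfolding cost_costrun R_def[symmetric] using sig_outcome s0_def by simp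
    then show ?thesis using s0_def by simp
  next
    case False
    define k1 where "k1 = (LEAST k. R k \<noteq> cc k)"
    have k1: "R k1 \<noteq> cc k1" unfolding k1_def by (rule LeastI_ex) (use False in blast)
    have lt: "k < k1 \<Longrightarrow> R k = cc k" for k unfolding k1_def using not_less_Least by blast
    have "R 0 = cc 0" unfolding R_def using cc0 s0_def by simp
    then have "k1 \<noteq> 0" using k1 by metis
    then obtain t where t: "k1 = Suc t" by (cases k1) auto
    have Rt: "k \<le> t \<Longrightarrow> R k = cc k" for k using lt t by simp
    have hR: "hist R t = hist cc t" using Rt by (intro hist_cong) auto
    define c'' where "c'' = R (Suc t)"
    have c''ne: "c'' \<noteq> cc (Suc t)" using k1 t c''_def by simp
    have c''c: "c'' \<in> configs A n" using Rc c''_def by simp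
    have oth: "c'' j = cc (Suc t) j" if "j < n" "j \<noteq> i0" for j
      using that unfolding c''_def R_Suc hR by (simp add: sig_onp)
    have stp: "step A n (cc t) c''"
    proof -
      have "step A n (R t) (R (Suc t))" using vrR by (simp add: vrun_def)
      then show ?thesis using Rt[of t] c''_def by simp
    qed
    have dv: "c'' \<in> dev A n i0 (cc t) (cc (Suc t))" unfolding dev_def using stp oth by simp
    have tL: "t < L"
    proof (rule ccontr)
      assume "\<not> t < L"
      then have e1: "cc t = cconst n (tgt A)" "cc (Suc t) = cconst n (tgt A)" using cc_ge by auto
      have "c'' j = tgt A" if "j < n" for j
      proof -
        have "edg A (cc t j) (c'' j) \<noteq> None" using stp that by (simp add: step_def)
        then show ?thesis using va_tgt_out[OF va] e1(1) that by (simp add: cconst_def)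
      qed
      then have "c'' = cc (Suc t)" using e1(2) by (intro configs_ext[OF c''c cc_configs]) (simp add: cconst_def)
      then show False using c''ne by simp
    qed
    define R' where "R' = (\<lambda>m. R (Suc t + m))"
    define \<tau>' where "\<tau>' = (\<lambda>g. \<tau> (hist R t @ g))"
    have hRc: "set (hist R t) \<subseteq> configs A n" using Rc by (rule hist_configs)
    have st': "is_strategy A n i0 \<tau>'"
      unfolding is_strategy_def
    proof (intro allI impI)
      fix g assume g: "g \<noteq> [] \<and> set g \<subseteq> configs A n"
      have "edg A (last (hist R t @ g) i0) (\<tau> (hist R t @ g)) \<noteq> None"
        using st[unfolded is_strategy_def, rule_format, of "hist R t @ g"] g hRc by simp
      then show "edg A (last g i0) (\<tau>' g) \<noteq> None" using g by (simp add: \<tau>'_def)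
    qed
    define P where "P = Pun i0 c''"
    have PP: "is_profile A n P" "\<And>\<tau>. is_strategy A n i0 \<tau> \<Longrightarrow> val A n i0 c'' \<le> cost A n (P(i0 := \<tau>)) c'' i0"
      using Pun[OF c''c i0] P_def by auto
    have R3: "outcome n (P(i0 := \<tau>')) c'' = R'"
    proof (rule outcome_unique)
      show "R' 0 = c''" by (simp add: R'_def c''_def)
      fix m
      define g where "g = hist R (Suc t + m)"
      have ha: "g = hist R t @ hist R' m" unfolding g_def R'_def using hist_append[of R t m] by simp
      have eq: "(sig(i0 := \<tau>)) j g = (P(i0 := \<tau>')) j (hist R' m)" for j
      proof (cases "j = i0")
        case True
        then show ?thesis using ha by (simp add: \<tau>'_def)
      next
        case False
        have gs: "g ! Suc t = c''" unfolding g_def c''_def by simp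
        have nonp: "\<not> (g \<noteq> [] \<and> g = hist cc (length g - 1))"
        proof
          assume "g \<noteq> [] \<and> g = hist cc (length g - 1)"
          then have "g ! Suc t = cc (Suc t)" unfolding g_def by (metis hist_len hist_nth le_add1 diff_Suc_1 add_Suc)
          then show False using gs c''ne by simp
        qed
        have dva: "devat A n cc g (Suc t) i0"
          unfolding devat_def
        proof (intro conjI)
          show "0 < Suc t" by simp
          show "Suc t < length g" by (simp add: g_def)
          show "take (Suc t) g = hist cc (Suc t - 1)" unfolding g_def using hist_take[of t "Suc t + m" R] hR by simp
          show "i0 < n" by (rule i0)
          show "g ! Suc t \<in> dev A n i0 (cc (Suc t - 1)) (cc (Suc t))" using gs dv by simp
          show "g ! Suc t \<noteq> cc (Suc t)" using gs c''ne by simp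
        qed
        have "sig j g = Pun i0 (g ! Suc t) j (drop (Suc t) g)" by (rule sig_devat[OF nonp dva])
        also have "\<dots> = Pun i0 c'' j (drop (Suc t) g)" using gs by simp
        also have "\<dots> = P j (hist R' m)" unfolding P_def g_def R'_def by (simp only: hist_drop)
        finally show ?thesis using False by simp
      qed
      have "R' (Suc m) = R (Suc (Suc t + m))" by (simp add: R'_def)
      also have "\<dots> = (\<lambda>j\<in>{0..<n}. (sig(i0 := \<tau>)) j g)" unfolding g_def by (rule R_Suc)
      also have "\<dots> = (\<lambda>j\<in>{0..<n}. (P(i0 := \<tau>')) j (hist R' m))" using eq by simp
      finally show "R' (Suc m) = (\<lambda>j\<in>{0..<n}. (P(i0 := \<tau>')) j (hist R' m))" .
    qed
    have "cost A n (sig(i0 := \<tau>)) s0 i0 = enat (\<Sum>s<Suc t. tcost A n (R s) (R (Suc s)) i0) + costrun A n R' i0"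
      unfolding cost_costrun R_def[symmetric] R'_def using costrun_split[OF va vrR i0, of "Suc t"] by simp
    also have "(\<Sum>s<Suc t. tcost A n (R s) (R (Suc s)) i0) = (\<Sum>s<t. W s i0) + tcost A n (cc t) c'' i0"
    proof -
      have "(\<Sum>s<t. tcost A n (R s) (R (Suc s)) i0) = (\<Sum>s<t. W s i0)"
        unfolding W_def using Rt by (intro sum.cong) auto
      then show ?thesis using Rt[of t] c''_def by simp
    qed
    also have "costrun A n R' i0 = cost A n (P(i0 := \<tau>')) c'' i0" using R3 by (simp add: cost_costrun)
    finally have eqc: "cost A n (sig(i0 := \<tau>)) s0 i0 = enat ((\<Sum>s<t. W s i0) + tcost A n (cc t) c'' i0) + cost A n (P(i0 := \<tau>')) c'' i0" .
    have "cost A n sig s0 i0 = enat (\<Sum>s<t. W s i0) + enat (rest t i0)"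
      using csig sumsplit[of t i0] tL by simp
    also have "\<dots> \<le> enat (\<Sum>s<t. W s i0) + (enat (tcost A n (cc t) c'' i0) + val A n i0 c'')"
      by (rule add_left_mono[OF key[OF tL i0 dv]])
    also have "\<dots> \<le> enat (\<Sum>s<t. W s i0) + (enat (tcost A n (cc t) c'' i0) + cost A n (P(i0 := \<tau>')) c'' i0)"
      by (intro add_left_mono PP(2)[OF st'])
    also have "\<dots> = cost A n (sig(i0 := \<tau>)) s0 i0"
      unfolding eqc by (simp only: plus_enat_simps(1)[symmetric] add.assoc)
    finally show ?thesis using s0_def by simp
  qed
qed

lemma sig_wsc: "wsc A n \<gamma> sig = ereal (sum_list zs)"
proof -
  have zn: "zs ! t = (\<Sum>k<n. \<gamma> k * real (W t k))" if "t < L" for t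
  proof -
    have "cc t = cf t" "cc (Suc t) = cf (Suc t)" using that by (auto simp: cc_def)
    then show ?thesis using Ge[OF that] by (simp add: W_def)
  qed
  have "wsc A n \<gamma> sig = (\<Sum>k<n. ereal (\<gamma> k * real (\<Sum>t<L. W t k)))"
    unfolding wsc_def by (intro sum.cong refl) (simp add: sig_cost)
  also have "\<dots> = ereal (\<Sum>k<n. \<Sum>t<L. \<gamma> k * real (W t k))"
    by (simp add: sum_distrib_left)
  also have "(\<Sum>k<n. \<Sum>t<L. \<gamma> k * real (W t k)) = (\<Sum>t<L. \<Sum>k<n. \<gamma> k * real (W t k))"
    by (rule sum.swap)
  also have "\<dots> = (\<Sum>t<L. zs ! t)" using zn by simp
  also have "\<dots> = sum_list zs" unfolding sum_list_sum_nth L_def lessThan_atLeast0 ..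
  finally show ?thesis .
qed

end

lemma path_ne:
  assumes va: "valid_arena A" and gp: "G_path A n \<gamma> vs zs"
  shows "\<exists>\<sigma>. nash_eq A n \<sigma> \<and> wsc A n \<gamma> \<sigma> = ereal (sum_list zs)"
proof -
  interpret gp_ctx A n \<gamma> vs zs using va gp by unfold_locales
  show ?thesis using sig_ne sig_wsc by blast
qed




definition lf :: "'v arena \<Rightarrow> 'v \<Rightarrow> 'v \<Rightarrow> nat \<Rightarrow> nat" where
  "lf A u v m = (case edg A u v of Some f \<Rightarrow> f m | None \<Rightarrow> 0)"

definition Fpot :: "'v arena \<Rightarrow> 'v \<Rightarrow> 'v \<Rightarrow> nat \<Rightarrow> nat" where
  "Fpot A u v m = (\<Sum>k\<in>{1..m}. lf A u v k)"

definition Phi :: "'v arena \<Rightarrow> nat set \<Rightarrow> 'v config \<Rightarrow> 'v config \<Rightarrow> nat" where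
  "Phi A S c c' = (\<Sum>e\<in>verts A \<times> verts A. Fpot A (fst e) (snd e) (card {j\<in>S. c j = fst e \<and> c' j = snd e}))"

lemma Fpot_Suc: "Fpot A u v (Suc m) = Fpot A u v m + lf A u v (Suc m)"
  unfolding Fpot_def by simp

lemma Fpot_0: "Fpot A u v 0 = 0" unfolding Fpot_def by simp

lemma Phi_split:
  assumes va: "valid_arena A" and st: "step A n c c'" and i: "i < n"
  shows "Phi A {0..<n} c c' = Phi A ({0..<n} - {i}) c c' + tcost A n c c' i"
proof -
  define e0 where "e0 = (c i, c' i)"
  have ci: "c i \<in> verts A" "c' i \<in> verts A" using st i by (auto simp: step_def configs_def)
  then have e0V: "e0 \<in> verts A \<times> verts A" by (simp add: e0_def)
  have fin: "finite (verts A \<times> verts A)" using va_finite[OF va] by simp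
  define G where "G S e = Fpot A (fst e) (snd e) (card {j\<in>S. c j = fst e \<and> c' j = snd e})" for S e
  have other: "G {0..<n} e = G ({0..<n} - {i}) e" if "e \<noteq> e0" for e
  proof -
    have "{j\<in>{0..<n}. c j = fst e \<and> c' j = snd e} = {j\<in>{0..<n} - {i}. c j = fst e \<and> c' j = snd e}"
      using that by (auto simp: e0_def)
    then show ?thesis by (simp add: G_def)
  qed
  have s1: "{j\<in>{0..<n}. c j = fst e0 \<and> c' j = snd e0} = insert i {j\<in>{0..<n} - {i}. c j = fst e0 \<and> c' j = snd e0}"
    using i by (auto simp: e0_def)
  have cardeq: "card {j\<in>{0..<n}. c j = fst e0 \<and> c' j = snd e0} = Suc (card {j\<in>{0..<n} - {i}. c j = fst e0 \<and> c' j = snd e0})"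
    unfolding s1 by (rule card_insert_disjoint) auto
  have ld: "load n c c' i = card {j\<in>{0..<n}. c j = fst e0 \<and> c' j = snd e0}"
    by (simp add: load_def e0_def)
  have tc: "tcost A n c c' i = lf A (fst e0) (snd e0) (card {j\<in>{0..<n}. c j = fst e0 \<and> c' j = snd e0})"
    unfolding tcost_def lf_def ld by (simp add: e0_def)
  have g0: "G {0..<n} e0 = G ({0..<n} - {i}) e0 + tcost A n c c' i"
    unfolding G_def tc cardeq by (simp add: Fpot_Suc)
  have "Phi A {0..<n} c c' = G {0..<n} e0 + (\<Sum>e\<in>verts A \<times> verts A - {e0}. G {0..<n} e)"
    unfolding Phi_def G_def[symmetric] by (rule sum.remove[OF fin e0V])
  also have "(\<Sum>e\<in>verts A \<times> verts A - {e0}. G {0..<n} e) = (\<Sum>e\<in>verts A \<times> verts A - {e0}. G ({0..<n} - {i}) e)"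
    using other by (intro sum.cong) auto
  also have "Phi A ({0..<n} - {i}) c c' = G ({0..<n} - {i}) e0 + (\<Sum>e\<in>verts A \<times> verts A - {e0}. G ({0..<n} - {i}) e)"
    unfolding Phi_def G_def[symmetric] by (rule sum.remove[OF fin e0V])
  ultimately show ?thesis using g0 by simp
qed

lemma Phi_cong: "(\<And>j. j \<in> S \<Longrightarrow> c1 j = c2 j \<and> c1' j = c2' j) \<Longrightarrow> Phi A S c1 c1' = Phi A S c2 c2'"
  unfolding Phi_def by (intro sum.cong refl arg_cong[where f = "Fpot A _ _"] arg_cong[where f = card]) auto

lemma Phi_tgt:
  assumes va: "valid_arena A"
  shows "Phi A {0..<n} (cconst n (tgt A)) (cconst n (tgt A)) = 0"
  unfolding Phi_def
proof (rule sum.neutral, rule ballI)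
  fix e assume "e \<in> verts A \<times> verts A"
  show "Fpot A (fst e) (snd e) (card {j \<in> {0..<n}. cconst n (tgt A) j = fst e \<and> cconst n (tgt A) j = snd e}) = 0"
  proof (cases "e = (tgt A, tgt A)")
    case True
    have "lf A (tgt A) (tgt A) k = 0" for k using va_tgt_loop[OF va] by (simp add: lf_def)
    then show ?thesis using True by (simp add: Fpot_def)
  next
    case False
    then have "{j \<in> {0..<n}. cconst n (tgt A) j = fst e \<and> cconst n (tgt A) j = snd e} = {}"
      by (auto simp: cconst_def prod_eq_iff)
    then show ?thesis by (simp only: Fpot_0 card.empty)
  qed
qed

lemma tgt_stay:
  assumes va: "valid_arena A" and vr: "vrun A n r" and t: "r T = cconst n (tgt A)"
  shows "r (T + m) = cconst n (tgt A)"
proof (rule configs_ext)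
  show "r (T + m) \<in> configs A n" using vr by (simp add: vrun_def step_def)
  show "cconst n (tgt A) \<in> configs A n" by (rule tgt_configs[OF va])
  fix j assume j: "j < n"
  have "r T j = tgt A" using t j by (simp add: cconst_def)
  then show "r (T + m) j = cconst n (tgt A) j" using absorb_run[OF va vr j, of T m] j by (simp add: cconst_def)
qed

definition goodrun :: "'v arena \<Rightarrow> nat \<Rightarrow> (nat \<Rightarrow> 'v config) \<Rightarrow> bool" where
  "goodrun A n r \<longleftrightarrow> vrun A n r \<and> r 0 = cconst n (src A) \<and> (\<exists>T. r T = cconst n (tgt A))"

definition Pot :: "'v arena \<Rightarrow> nat \<Rightarrow> (nat \<Rightarrow> 'v config) \<Rightarrow> nat" where
  "Pot A n r = (\<Sum>t<(LEAST T. r T = cconst n (tgt A)). Phi A {0..<n} (r t) (r (Suc t)))"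

lemma Pot_T:
  assumes va: "valid_arena A" and vr: "vrun A n r" and t: "r T = cconst n (tgt A)"
  shows "Pot A n r = (\<Sum>t<T. Phi A {0..<n} (r t) (r (Suc t)))"
proof -
  define L where "L = (LEAST T. r T = cconst n (tgt A))"
  have L: "r L = cconst n (tgt A)" unfolding L_def by (rule LeastI[of _ T]) (rule t)
  have LT: "L \<le> T" unfolding L_def by (rule Least_le) (rule t)
  have "(\<Sum>t<T. Phi A {0..<n} (r t) (r (Suc t))) = (\<Sum>t<L. Phi A {0..<n} (r t) (r (Suc t))) + (\<Sum>s<T - L. Phi A {0..<n} (r (L + s)) (r (Suc (L + s))))"
    using sum_split_shift[of "\<lambda>t. Phi A {0..<n} (r t) (r (Suc t))" L "T - L"] LT by simp
  also have "(\<Sum>s<T - L. Phi A {0..<n} (r (L + s)) (r (Suc (L + s)))) = 0"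
  proof (rule sum.neutral, rule ballI)
    fix s
    have "r (L + s) = cconst n (tgt A)" "r (L + Suc s) = cconst n (tgt A)" using tgt_stay[OF va vr L] by blast+
    then show "Phi A {0..<n} (r (L + s)) (r (Suc (L + s))) = 0" using Phi_tgt[OF va] by simp
  qed
  finally show ?thesis by (simp add: Pot_def L_def)
qed

lemma goodrun_ex:
  assumes va: "valid_arena A"
  shows "\<exists>r. goodrun A n r"
proof -
  define r where "r t = (\<lambda>j\<in>{0..<n}. (nxt A ^^ t) (src A))" for t
  have sv: "src A \<in> verts A" by (rule va_src[OF va])
  have iv: "(nxt A ^^ t) (src A) \<in> verts A" for t
  proof (induction t)
    case 0 then show ?case using sv by simp
  next
    case (Suc t) then show ?case using nxt_prop[OF va] by simp
  qed
  have rc: "r t \<in> configs A n" for t using iv by (simp add: r_def configs_def)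
  have ed: "edg A ((nxt A ^^ t) (src A)) ((nxt A ^^ Suc t) (src A)) \<noteq> None" for t
    using nxt_prop[OF va iv[of t]] by simp
  have vr: "vrun A n r" unfolding vrun_def step_def
  proof (rule allI, intro conjI)
    fix k show "r k \<in> configs A n" by (rule rc)
    show "r (Suc k) \<in> configs A n" by (rule rc)
    show "\<forall>i<n. edg A (r k i) (r (Suc k) i) \<noteq> None" using ed[of k] by (simp add: r_def)
  qed
  have "r (dst A (src A)) = cconst n (tgt A)"
    using nxt_iter_tgt[OF va sv] by (simp add: r_def cconst_def)
  moreover have "r 0 = cconst n (src A)" by (simp add: r_def cconst_def)
  ultimately show ?thesis using vr unfolding goodrun_def by blast
qed

lemma ne_exists:
  assumes va: "valid_arena A"
  shows "\<exists>\<sigma>. nash_eq A n \<sigma>"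
proof -
  obtain r0 where r0: "goodrun A n r0" using goodrun_ex[OF va] by blast
  obtain rm where rm: "goodrun A n rm" and rmin: "\<And>r. goodrun A n r \<Longrightarrow> Pot A n rm \<le> Pot A n r"
    using ex_has_least_nat[of "goodrun A n" r0 "Pot A n"] r0 by blast
  have vrm: "vrun A n rm" using rm by (simp add: goodrun_def)
  obtain T0 where T0: "rm T0 = cconst n (tgt A)" using rm by (auto simp: goodrun_def)
  define s0 where "s0 = cconst n (src A)"
  have s0c: "s0 \<in> configs A n" using src_configs[OF va] s0_def by simp
  have rmc: "rm t \<in> configs A n" for t using vrm by (simp add: vrun_def step_def)
  define \<sigma> where "\<sigma> j g = (if last g j = rm (length g - 1) j then rm (length g) j else nxt A (last g j))" for j g
  have pr: "is_profile A n \<sigma>"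
    unfolding is_profile_def is_strategy_def
  proof (intro allI impI)
    fix j g assume j: "j < n" and g: "g \<noteq> [] \<and> set g \<subseteq> configs A n"
    show "edg A (last g j) (\<sigma> j g) \<noteq> None"
    proof (cases "last g j = rm (length g - 1) j")
      case True
      have "step A n (rm (length g - 1)) (rm (Suc (length g - 1)))" using vrm by (simp add: vrun_def)
      then have "edg A (rm (length g - 1) j) (rm (length g) j) \<noteq> None" using j g by (simp add: step_def)
      then show ?thesis using True by (simp add: \<sigma>_def)
    next
      case False
      have "last g j \<in> verts A" using last_configs[of g A n j] g j by blast
      then show ?thesis using False nxt_prop[OF va] by (simp add: \<sigma>_def)
    qed
  qed
  have out: "outcome n \<sigma> s0 = rm"
  proof (rule outcome_unique)
    show "rm 0 = s0" using rm s0_def by (simp add: goodrun_def)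
    fix k show "rm (Suc k) = (\<lambda>i\<in>{0..<n}. \<sigma> i (hist rm k))"
      using configs_restrict[OF rmc, of "Suc k"] by (simp add: \<sigma>_def)
  qed
  have "nash_eq A n \<sigma>"
    unfolding nash_eq_def
  proof (intro conjI allI impI pr)
    fix i \<tau> assume i: "i < n" and st: "is_strategy A n i \<tau>"
    define R where "R = outcome n (\<sigma>(i := \<tau>)) s0"
    have pr': "is_profile A n (\<sigma>(i := \<tau>))" by (rule is_profile_upd[OF pr st])
    have vrR: "vrun A n R" unfolding R_def by (rule outcome_vrun[OF va pr' s0c])
    have oth: "R k j = rm k j" if "j < n" "j \<noteq> i" for k j
    proof (induction k)
      case 0 then show ?case using out rm s0_def by (simp add: R_def goodrun_def)
    next
      case (Suc k)
      have "R (Suc k) = (\<lambda>j\<in>{0..<n}. (\<sigma>(i := \<tau>)) j (hist R k))" unfolding R_def by (rule outcome_Suc)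
      then have "R (Suc k) j = \<sigma> j (hist R k)" using that by simp
      then show ?case using Suc by (simp add: \<sigma>_def)
    qed
    show "cost A n \<sigma> (cconst n (src A)) i \<le> cost A n (\<sigma>(i := \<tau>)) (cconst n (src A)) i"
    proof (cases "\<exists>k. R k i = tgt A")
      case False
      then have "cost A n (\<sigma>(i := \<tau>)) s0 i = \<infinity>" unfolding cost_costrun R_def[symmetric] costrun_def by simp
      then show ?thesis using s0_def by simp
    next
      case True
      then obtain k1 where k1: "R k1 i = tgt A" by blast
      define T where "T = k1 + T0"
      have RT: "R T = cconst n (tgt A)"
      proof (rule configs_ext)
        show "R T \<in> configs A n" using vrR by (simp add: vrun_def step_def)
        show "cconst n (tgt A) \<in> configs A n" by (rule tgt_configs[OF va])
        fix j assume j: "j < n"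
        show "R T j = cconst n (tgt A) j"
        proof (cases "j = i")
          case True
          then show ?thesis using absorb_run[OF va vrR i k1, of T0] j by (simp add: T_def cconst_def)
        next
          case False
          have "rm T = cconst n (tgt A)" using tgt_stay[OF va vrm T0, of k1] by (simp add: T_def add.commute)
          then show ?thesis using oth[OF j False] by simp
        qed
      qed
      have rmT: "rm T = cconst n (tgt A)" using tgt_stay[OF va vrm T0, of k1] by (simp add: T_def add.commute)
      have gR: "goodrun A n R" unfolding goodrun_def using vrR RT by (auto simp: R_def s0_def)
      have "Pot A n rm \<le> Pot A n R" by (rule rmin[OF gR])
      then have le: "(\<Sum>t<T. Phi A {0..<n} (rm t) (rm (Suc t))) \<le> (\<Sum>t<T. Phi A {0..<n} (R t) (R (Suc t)))"
        using Pot_T[OF va vrm rmT] Pot_T[OF va vrR RT] by simp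
      have sp: "Phi A {0..<n} (r t) (r (Suc t)) = Phi A ({0..<n} - {i}) (r t) (r (Suc t)) + tcost A n (r t) (r (Suc t)) i"
        if "vrun A n r" for r t using Phi_split[OF va _ i] that by (simp add: vrun_def)
      have same: "Phi A ({0..<n} - {i}) (R t) (R (Suc t)) = Phi A ({0..<n} - {i}) (rm t) (rm (Suc t))" for t
        using oth by (intro Phi_cong) auto
      have "(\<Sum>t<T. Phi A ({0..<n} - {i}) (rm t) (rm (Suc t))) + (\<Sum>t<T. tcost A n (rm t) (rm (Suc t)) i)
          \<le> (\<Sum>t<T. Phi A ({0..<n} - {i}) (rm t) (rm (Suc t))) + (\<Sum>t<T. tcost A n (R t) (R (Suc t)) i)"
        using le unfolding sp[OF vrm] sp[OF vrR] same sum.distrib .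
      then have le2: "(\<Sum>t<T. tcost A n (rm t) (rm (Suc t)) i) \<le> (\<Sum>t<T. tcost A n (R t) (R (Suc t)) i)"
        by simp
      have c1: "cost A n \<sigma> s0 i = enat (\<Sum>t<T. tcost A n (rm t) (rm (Suc t)) i)"
        unfolding cost_costrun out using costrun_at[OF va vrm i] rmT i by (simp add: cconst_def)
      have c2: "cost A n (\<sigma>(i := \<tau>)) s0 i = enat (\<Sum>t<T. tcost A n (R t) (R (Suc t)) i)"
        unfolding cost_costrun R_def[symmetric] using costrun_at[OF va vrR i] RT i by (simp add: cconst_def)
      show ?thesis using c1 c2 le2 s0_def by simp
    qed
  qed
  then show ?thesis by blast
qed




theorem mainTheorem6:
  fixes A :: "'v arena" and n :: nat and \<gamma> :: "nat \<Rightarrow> real"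
  assumes "valid_arena A"
  shows "\<exists>\<sigma> vs zs. gamma_minimal_NE A n \<gamma> \<sigma> \<and> shortest_G_path A n \<gamma> vs zs \<and>
                   ereal (sum_list zs) = wsc A n \<gamma> \<sigma>"
proof -
  note va = assms
  define NE where "NE = {\<sigma>. nash_eq A n \<sigma>}"
  define f where "f x = (\<Sum>k<n. ereal (\<gamma> k) * ereal_of_enat (x k))" for x :: "nat \<Rightarrow> enat"
  have ne: "NE \<noteq> {}" using ne_exists[OF va] NE_def by blast
  have sub: "wsc A n \<gamma> ` NE \<subseteq> f ` ({0..<n} \<rightarrow>\<^sub>E {..enat (Ybound A n)})"
  proof
    fix y assume "y \<in> wsc A n \<gamma> ` NE"
    then obtain \<sigma> where \<sigma>: "nash_eq A n \<sigma>" and y: "y = wsc A n \<gamma> \<sigma>" using NE_def by blast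
    define x where "x = (\<lambda>k\<in>{0..<n}. cost A n \<sigma> (cconst n (src A)) k)"
    have "x \<in> {0..<n} \<rightarrow>\<^sub>E {..enat (Ybound A n)}"
      using ne_cost_bound[OF va \<sigma>] by (auto simp: x_def)
    moreover have "y = f x" unfolding y wsc_def f_def x_def by (intro sum.cong) auto
    ultimately show "y \<in> f ` ({0..<n} \<rightarrow>\<^sub>E {..enat (Ybound A n)})" by blast
  qed
  have "finite {..enat (Ybound A n)}" by (rule finite_enat_bounded) simp
  then have fin: "finite (wsc A n \<gamma> ` NE)"
    by (intro finite_subset[OF sub] finite_imageI finite_PiE) auto
  have ne': "wsc A n \<gamma> ` NE \<noteq> {}" using ne by simp
  obtain \<sigma>0 where s0: "\<sigma>0 \<in> NE" and m: "wsc A n \<gamma> \<sigma>0 = Min (wsc A n \<gamma> ` NE)"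
    using Min_in[OF fin ne'] by auto
  have gm: "gamma_minimal_NE A n \<gamma> \<sigma>0"
    unfolding gamma_minimal_NE_def
  proof (intro conjI allI impI)
    show "nash_eq A n \<sigma>0" using s0 NE_def by simp
    fix \<sigma>' assume "nash_eq A n \<sigma>'"
    then show "wsc A n \<gamma> \<sigma>0 \<le> wsc A n \<gamma> \<sigma>'" unfolding m using fin NE_def by (intro Min_le) auto
  qed
  obtain vs zs where gp: "G_path A n \<gamma> vs zs" and eq: "ereal (sum_list zs) = wsc A n \<gamma> \<sigma>0"
  proof -
    have "nash_eq A n \<sigma>0" using s0 NE_def by simp
    from ne_path[OF va this, where \<gamma>=\<gamma>] show ?thesis using that by blast
  qed
  have "shortest_G_path A n \<gamma> vs zs"
    unfolding shortest_G_path_def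
  proof (intro conjI allI impI gp)
    fix vs' zs' assume "G_path A n \<gamma> vs' zs'"
    then obtain \<sigma> where \<sigma>: "nash_eq A n \<sigma>" and w: "wsc A n \<gamma> \<sigma> = ereal (sum_list zs')"
      using path_ne[OF va] by blast
    have "ereal (sum_list zs) \<le> ereal (sum_list zs')"
      unfolding eq w[symmetric] using gm \<sigma> by (simp add: gamma_minimal_NE_def)
    then show "sum_list zs \<le> sum_list zs'" by simp
  qed
  then show ?thesis using gm eq by blast
qed


end
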